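(* For every $n\ge 3$ and every field $\mathrm{k}$ of characteristic zero, the pre-WDVV ring $R_n$ is a Koszul algebra.
   Context: A stable $2$-partition of $\{1,\dots,n\}$ is an unordered partition $\sigma=S_1/S_2$ of $\{1,\dots,n\}$ into two blocks with $|S_1|,|S_2|\ge 2$; $P_n$ denotes the set of these. For $\sigma=S_1/S_2$, $\tau=T_1/T_2$ in $P_n$, $a(\sigma,\tau)$ is the number of nonempty pairwise distinct sets among $S_i\cap T_j$, $1\le i,j\le 2$. The pre-WDVV ring is the standard graded algebra $R_n=\mathrm{k}[x_\sigma:\sigma\in P_n]/J_n$, where $J_n$ is the ideal generated by all products $x_\sigma x_\tau$ with $a(\sigma,\tau)=4$. *)

theory Defs
  imports Main "HOL-Library.Poly_Mapping"
begin

type_synonym ('v, 'k) mpoly = "(('v \<Rightarrow>\<^sub>0 nat) \<Rightarrow>\<^sub>0 'k)"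

definition var :: "'v \<Rightarrow> ('v, 'k::comm_ring_1) mpoly" where
  "var v = Poly_Mapping.single (Poly_Mapping.single v 1) 1"

definition poly_over :: "'v set \<Rightarrow> ('v, 'k::comm_ring_1) mpoly \<Rightarrow> bool" where
  "poly_over V p \<longleftrightarrow> (\<forall>m \<in> Poly_Mapping.keys p. Poly_Mapping.keys m \<subseteq> V)"

definition homog :: "nat \<Rightarrow> ('v, 'k::comm_ring_1) mpoly \<Rightarrow> bool" where
  "homog d p \<longleftrightarrow> (\<forall>m \<in> Poly_Mapping.keys p. (\<Sum>v\<in>Poly_Mapping.keys m. Poly_Mapping.lookup m v) = d)"

definition gen_ideal :: "'v set \<Rightarrow> ('v, 'k::comm_ring_1) mpoly set \<Rightarrow> ('v, 'k) mpoly set" where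
  "gen_ideal V G = {p. \<exists>c. (\<forall>g\<in>G. poly_over V (c g)) \<and> p = (\<Sum>g\<in>G. c g * g)}"

text \<open>R is Koszul iff the residue field k = R/R_+ has a linear graded free resolution
  ... -> R(-2)^(b 2) -> R(-1)^(b 1) -> R^(b 0) = R -> k -> 0 ,
  i.e. all differentials are matrices of linear forms.  Modules over R are written as
  modules over the polynomial ring modulo J: the differential M i (entries M i r c,
  r < b (i-1), c < b i) is given by linear forms of the polynomial ring, and
  equalities in R^b are equalities modulo J componentwise.\<close>
definition koszul_quotient :: "'v set \<Rightarrow> ('v, 'k::comm_ring_1) mpoly set \<Rightarrow> bool" where
  "koszul_quotient V J \<longleftrightarrow>
    (\<exists>(b :: nat \<Rightarrow> nat) (M :: nat \<Rightarrow> nat \<Rightarrow> nat \<Rightarrow> ('v, 'k) mpoly).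
       b 0 = 1 \<and>
       \<comment> \<open>differentials are homogeneous of degree 0 between R(-i)^(b i) and R(-(i-1))^(b (i-1))\<close>
       (\<forall>i\<ge>1. \<forall>r<b (i - 1). \<forall>c<b i. poly_over V (M i r c) \<and> homog 1 (M i r c)) \<and>
       \<comment> \<open>exactness at R^(b 0): image of d_1 is the kernel R_+ of the augmentation R -> k\<close>
       (\<forall>p. poly_over V p \<longrightarrow>
          (p \<in> gen_ideal V (var ` V) \<longleftrightarrow>
           (\<exists>u. (\<forall>c<b 1. poly_over V (u c)) \<and> p - (\<Sum>c<b 1. M 1 0 c * u c) \<in> J))) \<and>
       \<comment> \<open>d_i o d_(i+1) = 0 in R\<close>
       (\<forall>i\<ge>1. \<forall>r<b (i - 1). \<forall>c<b (i + 1).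
          (\<Sum>j<b i. M i r j * M (i + 1) j c) \<in> J) \<and>
       \<comment> \<open>exactness at R^(b i), i >= 1: ker d_i = im d_(i+1)\<close>
       (\<forall>i\<ge>1. \<forall>u. (\<forall>j<b i. poly_over V (u j)) \<and>
              (\<forall>r<b (i - 1). (\<Sum>j<b i. M i r j * u j) \<in> J) \<longrightarrow>
          (\<exists>w. (\<forall>c<b (i + 1). poly_over V (w c)) \<and>
               (\<forall>j<b i. u j - (\<Sum>c<b (i + 1). M (i + 1) j c * w c) \<in> J))))"

text \<open>An unordered partition S1/S2 is represented as the set {S1, S2}.\<close>
definition P :: "nat \<Rightarrow> nat set set set" where
  "P n = {{S1, S2} | S1 S2. S1 \<union> S2 = {1..n} \<and> S1 \<inter> S2 = {} \<and> card S1 \<ge> 2 \<and> card S2 \<ge> 2}"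

definition a :: "nat set set \<Rightarrow> nat set set \<Rightarrow> nat" where
  "a \<sigma> \<tau> = card ({S \<inter> T | S T. S \<in> \<sigma> \<and> T \<in> \<tau>} - {{}})"

definition J :: "nat \<Rightarrow> (nat set set, 'k::comm_ring_1) mpoly set" where
  "J n = gen_ideal (P n) {var \<sigma> * var \<tau> | \<sigma> \<tau>. \<sigma> \<in> P n \<and> \<tau> \<in> P n \<and> a \<sigma> \<tau> = 4}"

definition preWDVV_koszul :: "'k::comm_ring_1 itself \<Rightarrow> nat \<Rightarrow> bool" where
  "preWDVV_koszul _ n \<longleftrightarrow> koszul_quotient (P n) (J n :: (nat set set, 'k) mpoly set)"

end

theory Submission
  imports Defs
begin

abbreviation lk where "lk \<equiv> Poly_Mapping.lookup"
abbreviation ks where "ks \<equiv> Poly_Mapping.keys"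
abbreviation sg where "sg \<equiv> Poly_Mapping.single"

lemma ks_uminus: "ks (- p) = ks (p::('a \<Rightarrow>\<^sub>0 'b::ab_group_add))"
  by (auto simp: in_keys_iff)

lemma ks_diff: "ks (p - q) \<subseteq> ks p \<union> ks (q::('a \<Rightarrow>\<^sub>0 'b::ab_group_add))"
  by (auto simp: in_keys_iff lookup_minus)

lemma ks_add_nat: "ks (m1 + m2) = ks m1 \<union> ks (m2::'a \<Rightarrow>\<^sub>0 nat)"
  by (auto simp: in_keys_iff lookup_add)

lemma poly_over_0[simp]: "poly_over V 0"
  by (simp add: poly_over_def)

lemma poly_over_1[simp]: "poly_over V 1"
  by (simp add: poly_over_def)

lemma poly_over_add[intro]: "poly_over V p \<Longrightarrow> poly_over V q \<Longrightarrow> poly_over V (p + q)"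
  unfolding poly_over_def by (metis (no_types) UnE keys_add subsetD)

lemma poly_over_uminus[intro]: "poly_over V p \<Longrightarrow> poly_over V (- (p :: ('v,'k::comm_ring_1) mpoly))"
  unfolding poly_over_def by (simp add: ks_uminus)

lemma poly_over_diff[intro]: "poly_over V p \<Longrightarrow> poly_over V q \<Longrightarrow> poly_over V (p - (q :: ('v,'k::comm_ring_1) mpoly))"
  unfolding poly_over_def by (metis (no_types) UnE ks_diff subsetD)

lemma poly_over_mult[intro]: "poly_over V p \<Longrightarrow> poly_over V q \<Longrightarrow> poly_over V (p * (q :: ('v,'k::comm_ring_1) mpoly))"
  unfolding poly_over_def
proof
  fix m assume p: "\<forall>m\<in>ks p. ks m \<subseteq> V" and q: "\<forall>m\<in>ks q. ks m \<subseteq> V" and m: "m \<in> ks (p * q)"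
  then obtain x y where "m = x + y" "x \<in> ks p" "y \<in> ks q" using keys_mult by blast
  then show "ks m \<subseteq> V" using p q by (auto simp: ks_add_nat)
qed

lemma poly_over_sum[intro]: "(\<And>i. i \<in> S \<Longrightarrow> poly_over V (f i)) \<Longrightarrow> poly_over V (sum f S)"
  by (induction S rule: infinite_finite_induct) auto

lemma poly_over_single[intro]: "ks m \<subseteq> V \<Longrightarrow> poly_over V (sg m c)"
  by (simp add: poly_over_def)

lemma poly_over_var[intro]: "v \<in> V \<Longrightarrow> poly_over V (var v)"
  by (simp add: var_def poly_over_def)

definition mdeg :: "('v \<Rightarrow>\<^sub>0 nat) \<Rightarrow> nat" where
  "mdeg m = sum (lk m) (ks m)"

lemma mdeg_superset: "finite S \<Longrightarrow> ks m \<subseteq> S \<Longrightarrow> mdeg m = sum (lk m) S"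
  unfolding mdeg_def by (rule sum.mono_neutral_left) (auto simp: in_keys_iff)

lemma mdeg_add[simp]: "mdeg (m1 + m2) = mdeg m1 + mdeg m2"
proof -
  let ?S = "ks m1 \<union> ks m2"
  have "mdeg (m1 + m2) = sum (lk (m1+m2)) ?S" by (rule mdeg_superset) (auto simp: ks_add_nat)
  also have "\<dots> = sum (lk m1) ?S + sum (lk m2) ?S" by (simp add: lookup_add sum.distrib)
  also have "\<dots> = mdeg m1 + mdeg m2" using mdeg_superset[of ?S m1] mdeg_superset[of ?S m2] by simp
  finally show ?thesis .
qed

lemma mdeg_single1[simp]: "mdeg (sg v (1::nat)) = 1"
  unfolding mdeg_def by simp

lemma mdeg_single_Suc[simp]: "mdeg (sg v (Suc 0)) = Suc 0"
  using mdeg_single1 by simp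

lemma homog_iff: "homog d p \<longleftrightarrow> (\<forall>m\<in>ks p. mdeg m = d)"
  by (simp add: homog_def mdeg_def)

lemma homog_0[simp]: "homog d 0"
  by (simp add: homog_iff)

lemma homog_add[intro]: "homog d p \<Longrightarrow> homog d q \<Longrightarrow> homog d (p + q)"
  unfolding homog_iff by (metis (no_types) UnE keys_add subsetD)

lemma homog_uminus[intro]: "homog d p \<Longrightarrow> homog d (- (p :: ('v,'k::comm_ring_1) mpoly))"
  by (simp only: homog_iff ks_uminus)

lemma homog_diff[intro]: "homog d p \<Longrightarrow> homog d q \<Longrightarrow> homog d (p - (q :: ('v,'k::comm_ring_1) mpoly))"
  unfolding homog_iff by (metis (no_types) UnE ks_diff subsetD)

lemma homog_sum[intro]: "(\<And>i. i \<in> S \<Longrightarrow> homog d (f i)) \<Longrightarrow> homog d (sum f S)"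
  by (induction S rule: infinite_finite_induct) auto

lemma homog_mult[intro]: "homog d1 p \<Longrightarrow> homog d2 q \<Longrightarrow> homog (d1 + d2) (p * (q :: ('v,'k::comm_ring_1) mpoly))"
  unfolding homog_iff
proof
  fix m assume p: "\<forall>m\<in>ks p. mdeg m = d1" and q: "\<forall>m\<in>ks q. mdeg m = d2" and m: "m \<in> ks (p * q)"
  then obtain x y where "m = x + y" "x \<in> ks p" "y \<in> ks q" using keys_mult by blast
  then show "mdeg m = d1 + d2" using p q by auto
qed

lemma homog_var[intro]: "homog 1 (var v :: ('v,'k::comm_ring_1) mpoly)"
  by (simp add: homog_iff var_def)

lemma homog_single: "mdeg m = d \<Longrightarrow> homog d (sg m c)"
  by (simp add: homog_iff)

definition hc :: "nat \<Rightarrow> ('v,'k::comm_ring_1) mpoly \<Rightarrow> ('v,'k) mpoly" where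
  "hc d p = Abs_poly_mapping (\<lambda>m. if mdeg m = d then lk p m else 0)"

lemma lk_hc: "lk (hc d p) m = (if mdeg m = d then lk p m else 0)"
proof -
  have "finite {m. (if mdeg m = d then lk p m else 0) \<noteq> 0}"
    by (rule finite_subset[OF _ finite_lookup[of p]]) auto
  then show ?thesis unfolding hc_def by simp
qed

lemma ks_hc: "ks (hc d p) \<subseteq> ks p"
  by (auto simp: in_keys_iff lk_hc split: if_splits)

lemma poly_over_hc[intro]: "poly_over V p \<Longrightarrow> poly_over V (hc d p)"
  using ks_hc unfolding poly_over_def by blast

lemma homog_hc[intro]: "homog d (hc d p)"
  by (auto simp: homog_iff in_keys_iff lk_hc split: if_splits)

lemma hc_add: "hc d (p + q) = hc d p + hc d q"
  by (rule poly_mapping_eqI) (simp add: lk_hc lookup_add)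

lemma hc_diff: "hc d (p - q) = hc d p - hc d q"
  by (rule poly_mapping_eqI) (simp add: lk_hc lookup_minus)

lemma hc_0[simp]: "hc d 0 = 0"
  by (rule poly_mapping_eqI) (simp add: lk_hc)

lemma hc_sum: "hc d (sum f S) = (\<Sum>i\<in>S. hc d (f i))"
  by (induction S rule: infinite_finite_induct) (auto simp: hc_add)

lemma hc_same: "homog d p \<Longrightarrow> hc d p = p"
  by (rule poly_mapping_eqI) (auto simp: lk_hc homog_iff in_keys_iff)

lemma hc_other: "homog e p \<Longrightarrow> e \<noteq> d \<Longrightarrow> hc d p = 0"
  by (rule poly_mapping_eqI) (auto simp: lk_hc homog_iff in_keys_iff)

lemma hc_decomp:
  assumes "\<forall>m\<in>ks p. mdeg m < N"
  shows "p = (\<Sum>k<N. hc k p)"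
proof (rule poly_mapping_eqI)
  fix m
  have "(\<Sum>k<N. lk (hc k p) m) = (if mdeg m < N then lk p m else 0)"
    by (simp add: lk_hc)
  also have "\<dots> = lk p m" using assms by (auto simp: in_keys_iff)
  finally show "lk p m = lk (\<Sum>k<N. hc k p) m" by (simp add: lookup_sum)
qed

lemma hc_big: "\<forall>m\<in>ks p. mdeg m < N \<Longrightarrow> N \<le> d \<Longrightarrow> hc d p = 0"
  by (rule poly_mapping_eqI) (auto simp: lk_hc, metis in_keys_iff leD)

lemma hc_mult:
  assumes g: "homog e g"
  shows "hc d (g * q) = (if e \<le> d then g * hc (d - e) q else 0)"
proof -
  define N where "N = Suc (Max (mdeg ` ks q))"
  have N: "\<forall>m\<in>ks q. mdeg m < N" unfolding N_def by (simp add: le_imp_less_Suc)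
  have "g * q = (\<Sum>k<N. g * hc k q)"
    using hc_decomp[OF N] by (metis sum_distrib_left)
  then have "hc d (g * q) = (\<Sum>k<N. hc d (g * hc k q))" by (simp add: hc_sum)
  also have "\<dots> = (\<Sum>k<N. if k = d - e \<and> e \<le> d then g * hc k q else 0)"
  proof (rule sum.cong)
    fix k assume "k \<in> {..<N}"
    have h: "homog (e + k) (g * hc k q)" using g by blast
    show "hc d (g * hc k q) = (if k = d - e \<and> e \<le> d then g * hc k q else 0)"
    proof (cases "e + k = d")
      case True then show ?thesis using hc_same[OF h] by auto
    next
      case False then show ?thesis using hc_other[OF h] by auto
    qed
  qed simp
  also have "\<dots> = (if e \<le> d then g * hc (d - e) q else 0)"
  proof (cases "e \<le> d")
    case True
    show ?thesis
    proof (cases "d - e < N")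
      case True2: True
      then show ?thesis using True by (simp add: sum.delta')
    next
      case False
      then have "hc (d - e) q = 0" using hc_big[OF N] by simp
      then show ?thesis using False by (simp add: sum.delta')
    qed
  qed simp
  finally show ?thesis .
qed

locale gens = fixes V :: "'v set" and G :: "('v,'k::comm_ring_1) mpoly set"
  assumes finG: "finite G" and povG: "\<And>g. g \<in> G \<Longrightarrow> poly_over V g"
begin

lemma ideal_0[simp]: "0 \<in> gen_ideal V G"
  unfolding gen_ideal_def by (rule CollectI, rule exI[of _ "\<lambda>_. 0"]) simp

lemma ideal_add: "p \<in> gen_ideal V G \<Longrightarrow> q \<in> gen_ideal V G \<Longrightarrow> p + q \<in> gen_ideal V G"
  unfolding gen_ideal_def
  apply clarify
  subgoal for c c' by (rule exI[of _ "\<lambda>g. c g + c' g"]) (auto simp: distrib_right sum.distrib)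
  done

lemma ideal_mult: "poly_over V r \<Longrightarrow> p \<in> gen_ideal V G \<Longrightarrow> r * p \<in> gen_ideal V G"
  unfolding gen_ideal_def
  apply clarify
  subgoal for c by (rule exI[of _ "\<lambda>g. r * c g"]) (auto simp: sum_distrib_left mult.assoc)
  done

lemma ideal_uminus: "p \<in> gen_ideal V G \<Longrightarrow> - p \<in> gen_ideal V G"
proof -
  assume p: "p \<in> gen_ideal V G"
  have "poly_over V (-1::('v,'k) mpoly)" by (rule poly_over_uminus) simp
  from ideal_mult[OF this p] show ?thesis by simp
qed

lemma ideal_diff: "p \<in> gen_ideal V G \<Longrightarrow> q \<in> gen_ideal V G \<Longrightarrow> p - q \<in> gen_ideal V G"
  using ideal_add[of p "- q"] ideal_uminus[of q] by simp

lemma ideal_sum: "(\<And>i. i \<in> S \<Longrightarrow> f i \<in> gen_ideal V G) \<Longrightarrow> sum f S \<in> gen_ideal V G"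
proof (induction S rule: infinite_finite_induct)
  case (insert x F)
  then show ?case by (simp add: ideal_add)
qed simp_all

lemma ideal_gen: "g \<in> G \<Longrightarrow> g \<in> gen_ideal V G"
proof -
  assume g: "g \<in> G"
  have "(\<Sum>h\<in>G. (if h = g then 1 else 0) * h) = (\<Sum>h\<in>G. if h = g then h else 0)"
    by (rule sum.cong) simp_all
  also have "\<dots> = g" using g finG by (simp only: sum.delta if_True)
  finally have eq: "(\<Sum>h\<in>G. (if h = g then 1 else 0) * h) = g" .
  show ?thesis unfolding gen_ideal_def mem_Collect_eq
    apply (rule exI[of _ "\<lambda>h. if h = g then 1 else 0"])
    apply (rule conjI)
     apply simp
    apply (simp only: eq)
    done
qed

lemma ideal_poly_over: "p \<in> gen_ideal V G \<Longrightarrow> poly_over V p"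
  unfolding gen_ideal_def using povG by auto

lemma ideal_hc:
  assumes "\<And>g. g \<in> G \<Longrightarrow> homog e g" and "p \<in> gen_ideal V G"
  shows "hc d p \<in> gen_ideal V G"
proof -
  from assms(2) obtain c where c: "\<forall>g\<in>G. poly_over V (c g)" "p = (\<Sum>g\<in>G. c g * g)"
    unfolding gen_ideal_def by auto
  have "hc d p = (\<Sum>g\<in>G. hc d (g * c g))" using c(2) by (simp add: hc_sum mult.commute)
  also have "\<dots> = (\<Sum>g\<in>G. if e \<le> d then hc (d - e) (c g) * g else 0)"
  proof (rule sum.cong)
    fix g assume g: "g \<in> G"
    show "hc d (g * c g) = (if e \<le> d then hc (d - e) (c g) * g else 0)"
      using hc_mult[OF assms(1)[OF g], of d "c g"] by (simp add: mult.commute)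
  qed simp
  also have "\<dots> \<in> gen_ideal V G"
  proof (rule ideal_sum)
    fix g assume g: "g \<in> G"
    have "hc (d - e) (c g) * g \<in> gen_ideal V G"
      by (rule ideal_mult[OF poly_over_hc ideal_gen]) (use c(1) g in auto)
    then show "(if e \<le> d then hc (d - e) (c g) * g else 0) \<in> gen_ideal V G" by simp
  qed
  finally show ?thesis .
qed

end

lemma gen_ideal_mono:
  assumes "G \<subseteq> G'" "finite G'"
  shows "gen_ideal V G \<subseteq> gen_ideal V G'"
proof
  fix p assume "p \<in> gen_ideal V G"
  then obtain c where c: "\<forall>g\<in>G. poly_over V (c g)" "p = (\<Sum>g\<in>G. c g * g)"
    unfolding gen_ideal_def by auto
  define c' where "c' g = (if g \<in> G then c g else 0)" for g
  have "p = (\<Sum>g\<in>G'. c' g * g)"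
    unfolding c(2) c'_def using assms by (intro sum.mono_neutral_cong_left) auto
  moreover have "\<forall>g\<in>G'. poly_over V (c' g)" using c(1) by (simp add: c'_def)
  ultimately show "p \<in> gen_ideal V G'" unfolding gen_ideal_def by auto
qed

definition mon :: "('v \<Rightarrow>\<^sub>0 nat) \<Rightarrow> ('v,'k::comm_ring_1) mpoly" where
  "mon m = sg m 1"

definition dvdm :: "('v \<Rightarrow>\<^sub>0 nat) \<Rightarrow> ('v \<Rightarrow>\<^sub>0 nat) \<Rightarrow> bool" where
  "dvdm g m \<longleftrightarrow> (\<forall>x. lk g x \<le> lk m x)"

lemma poly_expand: "p = (\<Sum>m\<in>ks p. sg m (lk p m))"
proof (rule poly_mapping_eqI)
  fix k
  have "(\<Sum>m\<in>ks p. lk (sg m (lk p m)) k) = (\<Sum>m\<in>ks p. if m = k then lk p m else 0)"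
    by (rule sum.cong) (auto simp: lookup_single when_def)
  also have "\<dots> = lk p k" by (simp add: sum.delta' in_keys_iff)
  finally show "lk p k = lk (\<Sum>m\<in>ks p. sg m (lk p m)) k" by (simp add: lookup_sum)
qed

lemma dvdm_split: "dvdm g m \<Longrightarrow> m = (m - g) + g"
  by (rule poly_mapping_eqI) (auto simp: dvdm_def lookup_add lookup_minus)

lemma ks_minus_nat: "ks (m - g) \<subseteq> ks (m::'v \<Rightarrow>\<^sub>0 nat)"
  by (auto simp: in_keys_iff lookup_minus)

lemma gens_mon: "finite Ms \<Longrightarrow> (\<And>g. g \<in> Ms \<Longrightarrow> ks g \<subseteq> V) \<Longrightarrow> gens V (mon ` Ms :: ('v,'k::comm_ring_1) mpoly set)"
  by unfold_locales (auto simp: mon_def)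

lemma mono_char1:
  assumes "finite Ms" "p \<in> gen_ideal V (mon ` Ms :: ('v,'k::comm_ring_1) mpoly set)" "m \<in> ks p"
  shows "\<exists>g\<in>Ms. dvdm g m"
proof -
  have "\<exists>c. (\<forall>g\<in>mon ` Ms. poly_over V (c g)) \<and> p = (\<Sum>h\<in>mon ` Ms. c h * h)"
    using assms(2) by (simp only: gen_ideal_def mem_Collect_eq)
  then obtain c where c: "p = (\<Sum>h\<in>mon ` Ms. c h * h)" by (elim exE conjE)
  then have "m \<in> (\<Union>h\<in>mon ` Ms. ks (c h * h))" using assms(3) keys_sum[of "\<lambda>h. c h * h" "mon ` Ms"] by (simp only: subset_iff)
  then obtain g where g: "g \<in> Ms" "m \<in> ks (c (mon g) * mon g)" by blast
  then obtain x y where "m = x + y" "y \<in> ks (mon g :: ('v,'k) mpoly)" using keys_mult by blast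
  then have "m = x + g" by (auto simp: mon_def split: if_splits)
  then have "dvdm g m" by (simp add: dvdm_def lookup_add)
  then show ?thesis using g by blast
qed

lemma mono_char2:
  assumes fin: "finite Ms" and MV: "\<And>g. g \<in> Ms \<Longrightarrow> ks g \<subseteq> V" and pv: "poly_over V p"
    and dv: "\<forall>m\<in>ks p. \<exists>g\<in>Ms. dvdm g m"
  shows "p \<in> gen_ideal V (mon ` Ms :: ('v,'k::comm_ring_1) mpoly set)"
proof -
  interpret gens V "mon ` Ms :: ('v,'k) mpoly set" by (rule gens_mon[OF fin MV])
  define gm where "gm m = (SOME g. g \<in> Ms \<and> dvdm g m)" for m
  have gm: "gm m \<in> Ms \<and> dvdm (gm m) m" if "m \<in> ks p" for m
    using dv that unfolding gm_def by (metis (mono_tags, lifting) someI_ex)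
  have "p = (\<Sum>m\<in>ks p. sg m (lk p m))" by (rule poly_expand)
  also have "\<dots> = (\<Sum>m\<in>ks p. sg (m - gm m) (lk p m) * mon (gm m))"
  proof (rule sum.cong)
    fix m assume m: "m \<in> ks p"
    have e: "(m - gm m) + gm m = m" using dvdm_split[of "gm m" m] gm[OF m] by simp
    have "sg (m - gm m) (lk p m) * mon (gm m) = sg ((m - gm m) + gm m) (lk p m)"
      by (simp add: mon_def mult_single)
    then show "sg m (lk p m) = sg (m - gm m) (lk p m) * mon (gm m)" by (simp only: e)
  qed simp
  also have "\<dots> \<in> gen_ideal V (mon ` Ms)"
  proof (rule ideal_sum)
    fix m assume m: "m \<in> ks p"
    have "ks m \<subseteq> V" using pv m unfolding poly_over_def by blast
    then have kv: "ks (m - gm m) \<subseteq> V" using ks_minus_nat[of m "gm m"] by (rule subset_trans[rotated])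
    have gmm: "mon (gm m) \<in> mon ` Ms" using gm[OF m] by (intro imageI) simp
    show "sg (m - gm m) (lk p m) * mon (gm m) \<in> gen_ideal V (mon ` Ms)"
      by (rule ideal_mult[OF poly_over_single[OF kv] ideal_gen[OF gmm]])
  qed
  finally show ?thesis .
qed

lemma var_mult_keys:
  assumes "m \<in> ks p"
  shows "sg v 1 + m \<in> ks (var v * (p :: ('v,'k::comm_ring_1) mpoly))"
proof -
  have "var v * p = (\<Sum>m\<in>ks p. var v * sg m (lk p m))"
    by (subst poly_expand[of p]) (simp add: sum_distrib_left)
  also have "\<dots> = (\<Sum>m\<in>ks p. sg (sg v 1 + m) (lk p m))"
    by (simp add: var_def mult_single)
  finally have eq: "var v * p = (\<Sum>m\<in>ks p. sg (sg v 1 + m) (lk p m))" .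
  have "lk (var v * p) (sg v 1 + m) = (\<Sum>m'\<in>ks p. if m' = m then lk p m' else 0)"
    unfolding eq lookup_sum by (rule sum.cong) (auto simp: lookup_single when_def)
  also have "\<dots> = lk p m" using assms by simp
  finally show ?thesis using assms by (simp add: in_keys_iff)
qed

lemma gen_ideal_subset:
  assumes "gens V G'" "finite G" "G \<subseteq> gen_ideal V G'"
  shows "gen_ideal V G \<subseteq> gen_ideal V G'"
proof
  interpret gens V G' by fact
  fix p assume "p \<in> gen_ideal V G"
  then obtain c where c: "\<forall>g\<in>G. poly_over V (c g)" "p = (\<Sum>g\<in>G. c g * g)"
    unfolding gen_ideal_def mem_Collect_eq by blast
  show "p \<in> gen_ideal V G'" unfolding c(2)
    by (rule ideal_sum, rule ideal_mult) (use c(1) assms(3) in auto)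
qed

locale kz = fixes V :: "'v set" and E :: "'v \<Rightarrow> 'v \<Rightarrow> bool" and rk :: "'v \<Rightarrow> nat"
  and kty :: "'k::field itself"
  assumes finV: "finite V" and rkinj: "inj_on rk V"
begin

definition Gs :: "('v,'k::field) mpoly set" where
  "Gs = {var x * var y | x y. x \<in> V \<and> y \<in> V \<and> E x y}"

abbreviation Jd :: "('v,'k::field) mpoly set" where
  "Jd \<equiv> gen_ideal V Gs"

definition Id :: "'v set \<Rightarrow> ('v,'k::field) mpoly set" where
  "Id T = gen_ideal V (var ` T \<union> Gs)"

definition Nb :: "'v \<Rightarrow> 'v set" where
  "Nb v = {u \<in> V. E v u \<or> E u v}"

definition Ms :: "'v set \<Rightarrow> ('v \<Rightarrow>\<^sub>0 nat) set" where
  "Ms T = (\<lambda>t. sg t 1) ` T \<union> {sg x 1 + sg y 1 | x y. x \<in> V \<and> y \<in> V \<and> E x y}"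

lemma Nb_sub: "Nb v \<subseteq> V" by (auto simp: Nb_def)

lemma Gs_img: "Gs = (\<lambda>(x, y). var x * var y) ` {(x, y). x \<in> V \<and> y \<in> V \<and> E x y}"
  unfolding Gs_def by auto

lemma finite_Gs: "finite Gs"
proof -
  have "{(x, y). x \<in> V \<and> y \<in> V \<and> E x y} \<subseteq> V \<times> V" by auto
  then have "finite {(x, y). x \<in> V \<and> y \<in> V \<and> E x y}" using finV finite_subset by blast
  then show ?thesis unfolding Gs_img by simp
qed

lemma pov_Gs: "g \<in> Gs \<Longrightarrow> poly_over V g"
  unfolding Gs_def by (auto intro!: poly_over_mult poly_over_var)

lemma homog_Gs: "g \<in> (Gs :: ('v,'k::field) mpoly set) \<Longrightarrow> homog 2 g"
proof -
  assume "g \<in> Gs"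
  then obtain x y where "g = var x * var y" unfolding Gs_def by blast
  moreover have "homog (1 + 1) (var x * var y :: ('v,'k) mpoly)" by (rule homog_mult[OF homog_var homog_var])
  ultimately show ?thesis unfolding one_add_one by simp
qed

lemma gens_J: "gens V (Gs :: ('v,'k::field) mpoly set)"
  by unfold_locales (auto simp: finite_Gs pov_Gs)

lemma gens_I: "T \<subseteq> V \<Longrightarrow> gens V (var ` T \<union> (Gs :: ('v,'k::field) mpoly set))"
  by unfold_locales (auto simp: finite_Gs pov_Gs finite_subset[OF _ finV] intro!: poly_over_var)

lemma J_sub_I: "T \<subseteq> V \<Longrightarrow> Jd \<subseteq> (Id T :: ('v,'k::field) mpoly set)"
  unfolding Id_def by (rule gen_ideal_mono) (auto simp: finite_Gs finite_subset[OF _ finV])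

lemma var_in_I: "T \<subseteq> V \<Longrightarrow> t \<in> T \<Longrightarrow> var t \<in> (Id T :: ('v,'k::field) mpoly set)"
  unfolding Id_def by (rule gens.ideal_gen[OF gens_I]) auto

lemma Ms_mon: "var ` T \<union> (Gs :: ('v,'k::field) mpoly set) = mon ` Ms T"
proof -
  have 1: "var ` T = (mon ` ((\<lambda>t. sg t 1) ` T) :: ('v,'k) mpoly set)"
    by (auto simp: var_def mon_def image_image)
  have 2: "(Gs :: ('v,'k) mpoly set) = mon ` {sg x 1 + sg y 1 | x y. x \<in> V \<and> y \<in> V \<and> E x y}"
    unfolding Gs_def by (auto simp: var_def mon_def mult_single)
  show ?thesis unfolding 1 2 Ms_def image_Un ..
qed

lemma finite_Ms: "T \<subseteq> V \<Longrightarrow> finite (Ms T)"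
proof -
  assume T: "T \<subseteq> V"
  have eq: "{sg x 1 + sg y 1 | x y. x \<in> V \<and> y \<in> V \<and> E x y} = (\<lambda>(x,y). sg x 1 + sg y 1) ` {(x, y). x \<in> V \<and> y \<in> V \<and> E x y}"
    by auto
  have fin: "finite {(x, y). x \<in> V \<and> y \<in> V \<and> E x y}"
    by (rule finite_subset[of _ "V \<times> V"]) (auto simp: finV)
  have f: "finite {sg x 1 + sg y 1 | x y. x \<in> V \<and> y \<in> V \<and> E x y}"
    unfolding eq by (rule finite_imageI[OF fin])
  have "finite ((\<lambda>t. sg t (1::nat)) ` T)" using finite_subset[OF T finV] by (rule finite_imageI)
  then show ?thesis unfolding Ms_def using f by (simp only: finite_Un)
qed

lemma ks_Ms: "T \<subseteq> V \<Longrightarrow> g \<in> Ms T \<Longrightarrow> ks g \<subseteq> V"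
  unfolding Ms_def by (auto simp: ks_add_nat)

lemma lk_sg1: "lk (sg t (1::nat)) x = (if x = t then 1 else 0)"
  by (simp add: lookup_single when_def)

lemma lk_sgS: "lk (sg t (Suc 0)) x = (if x = t then 1 else 0)"
  by (simp add: lookup_single when_def)

lemma colon:
  assumes T: "T \<subseteq> V" and v: "v \<in> V" "v \<notin> T" and pv: "poly_over V p"
    and mem: "var v * p \<in> (Id T :: ('v,'k::field) mpoly set)"
  shows "p \<in> Id (T \<union> Nb v)"
proof -
  have TU: "T \<union> Nb v \<subseteq> V" using T Nb_sub by auto
  have mem': "var v * p \<in> gen_ideal V (mon ` Ms T :: ('v,'k) mpoly set)"
    using mem unfolding Id_def Ms_mon .
  have "p \<in> gen_ideal V (mon ` Ms (T \<union> Nb v) :: ('v,'k) mpoly set)"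
  proof (rule mono_char2[OF finite_Ms[OF TU]])
    show "\<And>g. g \<in> Ms (T \<union> Nb v) \<Longrightarrow> ks g \<subseteq> V" using ks_Ms[OF TU] .
    show "poly_over V p" by fact
    show "\<forall>m\<in>ks p. \<exists>g\<in>Ms (T \<union> Nb v). dvdm g m"
    proof
      fix m assume m: "m \<in> ks p"
      have "sg v 1 + m \<in> ks (var v * p)" by (rule var_mult_keys[OF m])
      then obtain g where g: "g \<in> Ms T" "dvdm g (sg v 1 + m)"
        using mono_char1[OF finite_Ms[OF T] mem'] by blast
      have le: "lk g z \<le> (if z = v then 1 else 0) + lk m z" for z
        using g(2) unfolding dvdm_def by (simp add: lookup_add lk_sg1 lk_sgS)
      show "\<exists>g\<in>Ms (T \<union> Nb v). dvdm g m"
      proof (cases "g \<in> (\<lambda>t. sg t 1) ` T")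
        case True
        then obtain t where t: "t \<in> T" "g = sg t 1" by blast
        have "t \<noteq> v" using t v by auto
        then have mt: "lk m t \<ge> 1" using le[of t] t by (simp add: lk_sg1 lk_sgS)
        then have "dvdm g m" unfolding dvdm_def using t(2) by (auto simp: lk_sg1 lk_sgS)
        moreover have "g \<in> Ms (T \<union> Nb v)" using t unfolding Ms_def by blast
        ultimately show ?thesis by blast
      next
        case False
        then obtain x y where xy: "x \<in> V" "y \<in> V" "E x y" "g = sg x 1 + sg y 1"
          using g(1) unfolding Ms_def by blast
        have lg: "lk g z = (if z = x then 1 else 0) + (if z = y then 1 else 0)" for z
          using xy(4) by (simp add: lookup_add lk_sg1 lk_sgS)
        show ?thesis
        proof (cases "x = v")
          case xv: True
          show ?thesis
          proof (cases "y = v")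
            case yv: True
            have "lk m v \<ge> 1" using le[of v] lg[of v] xv yv by simp
            then have "dvdm (sg v 1) m" unfolding dvdm_def by (auto simp: lk_sg1 lk_sgS)
            moreover have "v \<in> Nb v" using xy xv yv v unfolding Nb_def by auto
            then have "sg v 1 \<in> Ms (T \<union> Nb v)" unfolding Ms_def by blast
            ultimately show ?thesis by blast
          next
            case yv: False
            have "lk m y \<ge> 1" using le[of y] lg[of y] xv yv by simp
            then have "dvdm (sg y 1) m" unfolding dvdm_def by (auto simp: lk_sg1 lk_sgS)
            moreover have "y \<in> Nb v" using xy xv unfolding Nb_def by auto
            then have "sg y 1 \<in> Ms (T \<union> Nb v)" unfolding Ms_def by blast
            ultimately show ?thesis by blast
          qed
        next
          case xv: False
          show ?thesis
          proof (cases "y = v")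
            case yv: True
            have "lk m x \<ge> 1" using le[of x] lg[of x] xv yv by simp
            then have "dvdm (sg x 1) m" unfolding dvdm_def by (auto simp: lk_sg1 lk_sgS)
            moreover have "x \<in> Nb v" using xy yv unfolding Nb_def by auto
            then have "sg x 1 \<in> Ms (T \<union> Nb v)" unfolding Ms_def by blast
            ultimately show ?thesis by blast
          next
            case yv: False
            have "lk g z \<le> lk m z" for z
              using le[of z] lg[of z] xv yv by (cases "z = v") auto
            then have "dvdm g m" unfolding dvdm_def by blast
            moreover have "g \<in> Ms (T \<union> Nb v)" using xy unfolding Ms_def by blast
            ultimately show ?thesis by blast
          qed
        qed
      qed
    qed
  qed
  then show ?thesis unfolding Id_def Ms_mon .
qed

lemma inj_var: "inj_on (var :: 'v \<Rightarrow> ('v,'k::field) mpoly) S"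
proof
  fix x y assume "(var x :: ('v,'k) mpoly) = var y"
  then have "lk (var x :: ('v,'k) mpoly) (sg x 1) = lk (var y :: ('v,'k) mpoly) (sg x 1)" by simp
  then have "sg y (1::nat) = sg x 1" by (simp add: var_def lookup_single when_def split: if_splits)
  then have "lk (sg y (1::nat)) x = lk (sg x 1) x" by simp
  then show "x = y" by (simp add: lk_sg1 lk_sgS split: if_splits)
qed

lemma Id_E0:
  assumes T: "T \<subseteq> V" and pv: "poly_over V p"
  shows "p \<in> (Id T :: ('v,'k::field) mpoly set) \<longleftrightarrow>
         (\<exists>u. (\<forall>t. poly_over V (u t)) \<and> p - (\<Sum>t\<in>T. u t * var t) \<in> Jd)"
proof
  assume "p \<in> Id T"
  then have "\<exists>c. (\<forall>g\<in>var ` T \<union> Gs. poly_over V (c g)) \<and> p = (\<Sum>g\<in>var ` T \<union> Gs. c g * g)"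
    unfolding Id_def by (simp only: gen_ideal_def mem_Collect_eq)
  then obtain c where c: "\<forall>g\<in>var ` T \<union> Gs. poly_over V (c g)" "p = (\<Sum>g\<in>var ` T \<union> Gs. c g * g)"
    by (elim exE conjE)
  have finT: "finite T" using finite_subset[OF T finV] .
  have "p = (\<Sum>g\<in>var ` T \<union> (Gs - var ` T). c g * g)" unfolding c(2) by (simp only: Un_Diff_cancel)
  also have "\<dots> = (\<Sum>g\<in>var ` T. c g * g) + (\<Sum>g\<in>Gs - var ` T. c g * g)"
    by (rule sum.union_disjoint) (use finT finite_Gs in auto)
  also have "(\<Sum>g\<in>var ` T. c g * g) = (\<Sum>t\<in>T. c (var t) * var t)"
    by (rule sum.reindex_cong[OF inj_var]) auto
  finally have p: "p - (\<Sum>t\<in>T. c (var t) * var t) = (\<Sum>g\<in>Gs - var ` T. c g * g)" by simp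
  have "(\<Sum>g\<in>Gs - var ` T. c g * g) \<in> gen_ideal V (Gs - var ` T)"
    unfolding gen_ideal_def using c(1) by blast
  also have "\<dots> \<subseteq> Jd" by (rule gen_ideal_mono) (auto simp: finite_Gs)
  finally have "p - (\<Sum>t\<in>T. c (var t) * var t) \<in> Jd" unfolding p .
  moreover have "p - (\<Sum>t\<in>T. (if t \<in> T then c (var t) else 0) * var t) = p - (\<Sum>t\<in>T. c (var t) * var t)"
    by simp
  moreover have "\<forall>t. poly_over V (if t \<in> T then c (var t) else 0)" using c(1) by auto
  ultimately show "\<exists>u. (\<forall>t. poly_over V (u t)) \<and> p - (\<Sum>t\<in>T. u t * var t) \<in> Jd"
    by (intro exI[of _ "\<lambda>t. if t \<in> T then c (var t) else 0"]) simp
next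
  assume "\<exists>u. (\<forall>t. poly_over V (u t)) \<and> p - (\<Sum>t\<in>T. u t * var t) \<in> Jd"
  then obtain u where u: "\<forall>t. poly_over V (u t)" "p - (\<Sum>t\<in>T. u t * var t) \<in> Jd" by blast
  interpret I: gens V "var ` T \<union> Gs" by (rule gens_I[OF T])
  have 1: "p - (\<Sum>t\<in>T. u t * var t) \<in> Id T" using u(2) J_sub_I[OF T] by blast
  have 2: "(\<Sum>t\<in>T. u t * var t) \<in> Id T"
    unfolding Id_def by (rule I.ideal_sum, rule I.ideal_mult) (use u(1) in \<open>auto intro: I.ideal_gen\<close>)
  have "p = (p - (\<Sum>t\<in>T. u t * var t)) + (\<Sum>t\<in>T. u t * var t)" by simp
  then show "p \<in> Id T" using I.ideal_add[OF 1[unfolded Id_def] 2[unfolded Id_def]] unfolding Id_def by simp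
qed

lemma Id_V: "gen_ideal V (var ` V) = (Id V :: ('v,'k::field) mpoly set)"
proof
  show "gen_ideal V (var ` V) \<subseteq> Id V"
    unfolding Id_def by (rule gen_ideal_mono) (auto simp: finite_Gs finV)
  have gvv: "gens V (var ` V :: ('v,'k) mpoly set)" by unfold_locales (auto simp: finV)
  interpret gv: gens V "var ` V :: ('v,'k) mpoly set" by (rule gvv)
  have fin: "finite (var ` V \<union> Gs :: ('v,'k) mpoly set)" by (simp add: finV finite_Gs)
  have sub: "var ` V \<union> Gs \<subseteq> (gen_ideal V (var ` V) :: ('v,'k) mpoly set)"
  proof
    fix g assume "g \<in> (var ` V \<union> Gs :: ('v,'k) mpoly set)"
    then consider "g \<in> var ` V" | x y where "x \<in> V" "y \<in> V" "g = var x * var y"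
      unfolding Gs_def by blast
    then show "g \<in> gen_ideal V (var ` V)"
    proof cases
      case 1 then show ?thesis by (rule gv.ideal_gen)
    next
      case 2
      have "var x * var y \<in> gen_ideal V (var ` V :: ('v,'k) mpoly set)"
        by (rule gv.ideal_mult[OF poly_over_var gv.ideal_gen]) (use 2 in auto)
      then show ?thesis using 2 by simp
    qed
  qed
  show "(Id V :: ('v,'k) mpoly set) \<subseteq> gen_ideal V (var ` V)"
    unfolding Id_def by (rule gen_ideal_subset[OF gvv fin sub])
qed

end

definition prefix :: "'v \<Rightarrow> ('v list \<Rightarrow> 'a::zero) \<Rightarrow> 'v list \<Rightarrow> 'a" where
  "prefix t z x = (case x of [] \<Rightarrow> 0 | s # y \<Rightarrow> if s = t then z y else 0)"

lemma prefix_Nil[simp]: "prefix t z [] = 0" by (simp add: prefix_def)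
lemma prefix_Cons[simp]: "prefix t z (s # y) = (if s = t then z y else 0)" by (simp add: prefix_def)

definition app :: "'w set \<Rightarrow> ('w \<Rightarrow> 'w \<Rightarrow> 'p::comm_ring_1) \<Rightarrow> ('w \<Rightarrow> 'p) \<Rightarrow> 'w \<Rightarrow> 'p" where
  "app S f z x = (\<Sum>w\<in>S. z w * f w x)"

definition vecin :: "'w set \<Rightarrow> ('w \<Rightarrow> 'a::zero) \<Rightarrow> bool" where
  "vecin S y \<longleftrightarrow> (\<forall>x. x \<notin> S \<longrightarrow> y x = 0)"

lemma app_mono_neutral:
  assumes "finite S'" "S \<subseteq> S'" "vecin S z"
  shows "app S' f z x = app S f z x"
  unfolding app_def
  by (rule sum.mono_neutral_right) (use assms in \<open>auto simp: vecin_def\<close>)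

lemma app_cong: "(\<And>w. w \<in> S \<Longrightarrow> f w x = g w x) \<Longrightarrow> app S f z x = app S g z x"
  unfolding app_def by (rule sum.cong) auto

lemma app_prefix:
  assumes "finite S'" "(#) t ` S \<subseteq> S'" "vecin S z"
  shows "app S' f (prefix t z) x = (\<Sum>w\<in>S. z w * f (t # w) x)"
proof -
  have "app S' f (prefix t z) x = app ((#) t ` S) f (prefix t z) x"
  proof (rule app_mono_neutral[OF assms(1,2)])
    show "vecin ((#) t ` S) (prefix t z)"
      unfolding vecin_def
    proof (intro allI impI)
      fix y assume y: "y \<notin> (#) t ` S"
      show "prefix t z y = 0"
      proof (cases y)
        case (Cons s y')
        then show ?thesis using y assms(3) unfolding vecin_def by auto
      qed simp
    qed
  qed
  also have "\<dots> = (\<Sum>w\<in>S. z w * f (t # w) x)"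
    unfolding app_def by (subst sum.reindex) (auto simp: inj_on_def)
  finally show ?thesis .
qed

lemma app_comp: "app S2 g (app S1 f z) x = app S1 (\<lambda>w. app S2 g (f w)) z x"
  unfolding app_def
  by (simp add: sum_distrib_left sum_distrib_right mult.assoc) (rule sum.swap)

lemma sum_prefix: "(\<Sum>w\<in>S. (z w :: 'a::comm_ring_1) * prefix t (g w) x) = prefix t (\<lambda>y. \<Sum>w\<in>S. z w * g w y) x"
  by (cases x) auto

lemma app_diff_vec: "app S f (\<lambda>w. y w - z w) x = app S f y x - app S f z x"
  unfolding app_def by (simp add: left_diff_distrib sum_subtractf)

lemma app_add_vec: "app S f (\<lambda>w. y w + z w) x = app S f y x + app S f z x"
  unfolding app_def by (simp add: distrib_right sum.distrib)

lemma app_uminus_vec: "app S f (\<lambda>w. - y w) x = - app S f y x"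
  unfolding app_def by (simp add: sum_negf)

lemma app_diff_mat: "app S (\<lambda>w x. f w x - g w x) z x = app S f z x - app S g z x"
  unfolding app_def by (simp add: right_diff_distrib sum_subtractf)

lemma app_zero_vec[simp]: "app S f (\<lambda>w. 0) x = 0"
  unfolding app_def by simp

lemma app_empty[simp]: "app {} f z x = 0"
  unfolding app_def by simp

context kz
begin

definition Lt :: "'v set \<Rightarrow> 'v \<Rightarrow> 'v set" where
  "Lt T t = {u \<in> T. rk u < rk t}"

fun adm :: "'v set \<Rightarrow> 'v list \<Rightarrow> bool" where
  "adm T [] = True"
| "adm T (t # w) = (t \<in> T \<and> adm (Lt T t \<union> Nb t) w)"

definition B :: "nat \<Rightarrow> 'v set \<Rightarrow> 'v list set" where
  "B i T = {w. adm T w \<and> length w = i}"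

definition jeq :: "('w \<Rightarrow> ('v,'k::field) mpoly) \<Rightarrow> ('w \<Rightarrow> ('v,'k) mpoly) \<Rightarrow> bool" where
  "jeq y z \<longleftrightarrow> (\<forall>x. y x - z x \<in> Jd)"

definition lin :: "('w \<Rightarrow> ('v,'k::field) mpoly) \<Rightarrow> bool" where
  "lin y \<longleftrightarrow> (\<forall>x. poly_over V (y x) \<and> homog 1 (y x))"

definition pov :: "('w \<Rightarrow> ('v,'k::field) mpoly) \<Rightarrow> bool" where
  "pov y \<longleftrightarrow> (\<forall>x. poly_over V (y x))"

lemma Lt_sub: "Lt T t \<subseteq> T" by (auto simp: Lt_def)

lemma Lt_mono: "T \<subseteq> T' \<Longrightarrow> Lt T t \<subseteq> Lt T' t" by (auto simp: Lt_def)

lemma adm_mono: "T \<subseteq> T' \<Longrightarrow> adm T w \<Longrightarrow> adm T' w"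
proof (induction w arbitrary: T T')
  case (Cons t w)
  have sub: "Lt T t \<union> Nb t \<subseteq> Lt T' t \<union> Nb t" using Lt_mono[OF Cons.prems(1)] by blast
  have "adm (Lt T' t \<union> Nb t) w" using Cons.IH[OF sub] Cons.prems(2) by simp
  then show ?case using Cons.prems by auto
qed simp

lemma adm_set: "T \<subseteq> V \<Longrightarrow> adm T w \<Longrightarrow> set w \<subseteq> V"
proof (induction w arbitrary: T)
  case (Cons t w)
  have sub: "Lt T t \<union> Nb t \<subseteq> V" using Lt_sub[of T t] Cons.prems(1) Nb_sub[of t] by blast
  have "set w \<subseteq> V" using Cons.IH[OF sub] Cons.prems(2) by simp
  then show ?case using Cons.prems by auto
qed simp

lemma finite_B: "T \<subseteq> V \<Longrightarrow> finite (B i T)"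
proof -
  assume T: "T \<subseteq> V"
  have "B i T \<subseteq> {w. set w \<subseteq> V \<and> length w = i}" unfolding B_def using adm_set[OF T] by blast
  moreover have "finite {w. set w \<subseteq> V \<and> length w = i}" by (rule finite_lists_length_eq[OF finV])
  ultimately show ?thesis by (rule finite_subset)
qed

lemma B_0[simp]: "B 0 T = {[]}" by (auto simp: B_def)

lemma Cons_B: "t # w \<in> B (Suc i) T \<longleftrightarrow> t \<in> T \<and> w \<in> B i (Lt T t \<union> Nb t)"
  by (auto simp: B_def)

lemma Nil_B: "[] \<notin> B (Suc i) T" by (auto simp: B_def)

lemma B_mono: "T \<subseteq> T' \<Longrightarrow> B i T \<subseteq> B i T'"
  unfolding B_def using adm_mono by blast

lemma B_empty: "B (Suc i) {} = {}"
proof -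
  have "w \<notin> B (Suc i) {}" for w by (cases w) (auto simp: B_def)
  then show ?thesis by blast
qed

lemma B_1: "B (Suc 0) T = (\<lambda>s. [s]) ` T"
proof
  show "B (Suc 0) T \<subseteq> (\<lambda>s. [s]) ` T"
  proof
    fix w assume "w \<in> B (Suc 0) T"
    then obtain s where "w = [s]" "s \<in> T" unfolding B_def by (cases w) auto
    then show "w \<in> (\<lambda>s. [s]) ` T" by blast
  qed
  show "(\<lambda>s. [s]) ` T \<subseteq> B (Suc 0) T" by (auto simp: B_def)
qed

lemma B_len: "w \<in> B i T \<Longrightarrow> length w = i" by (simp add: B_def)

lemma Lt_loc:
  assumes "T' \<subseteq> T" "s \<in> T'" "\<And>u. u \<in> T \<Longrightarrow> rk u < rk s \<Longrightarrow> u \<in> T'"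
  shows "Lt T' s = Lt T s"
  using assms unfolding Lt_def by auto

lemma Lt_Lt: "s \<in> Lt T t \<Longrightarrow> Lt (Lt T t) s = Lt T s"
  by (rule Lt_loc) (auto simp: Lt_def)

context
  fixes T v assumes T: "T \<subseteq> V" and v: "v \<in> T" and vmax: "\<And>u. u \<in> T \<Longrightarrow> rk u \<le> rk v"
begin

lemma Lt_max: "Lt T v = T - {v}"
proof -
  have "rk u < rk v" if "u \<in> T" "u \<noteq> v" for u
    using vmax[OF that(1)] rkinj that T v unfolding inj_on_def
    by (metis le_neq_implies_less subsetD)
  then show ?thesis unfolding Lt_def by auto
qed

lemma Lt_rem: "s \<in> T - {v} \<Longrightarrow> Lt (T - {v}) s = Lt T s"
proof (rule Lt_loc)
  fix u assume s: "s \<in> T - {v}" and u: "u \<in> T" "rk u < rk s"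
  have "s \<in> Lt T v" using s Lt_max by simp
  then have "rk s < rk v" by (simp add: Lt_def)
  then show "u \<in> T - {v}" using u by auto
qed auto

lemma B_split: "B (Suc i) T = B (Suc i) (T - {v}) \<union> (#) v ` B i ((T - {v}) \<union> Nb v)"
proof
  show "B (Suc i) T \<subseteq> B (Suc i) (T - {v}) \<union> (#) v ` B i ((T - {v}) \<union> Nb v)"
  proof
    fix w assume w: "w \<in> B (Suc i) T"
    then obtain t y where ty: "w = t # y" using Nil_B by (cases w) auto
    then have t: "t \<in> T" "y \<in> B i (Lt T t \<union> Nb t)" using w Cons_B by auto
    show "w \<in> B (Suc i) (T - {v}) \<union> (#) v ` B i ((T - {v}) \<union> Nb v)"
    proof (cases "t = v")
      case True then show ?thesis using t ty Lt_max by auto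
    next
      case False then show ?thesis using t ty Lt_rem[of t] Cons_B by auto
    qed
  qed
  show "B (Suc i) (T - {v}) \<union> (#) v ` B i ((T - {v}) \<union> Nb v) \<subseteq> B (Suc i) T"
  proof
    fix w assume "w \<in> B (Suc i) (T - {v}) \<union> (#) v ` B i ((T - {v}) \<union> Nb v)"
    then consider "w \<in> B (Suc i) (T - {v})" | y where "w = v # y" "y \<in> B i ((T - {v}) \<union> Nb v)" by blast
    then show "w \<in> B (Suc i) T"
    proof cases
      case 1 then show ?thesis using B_mono[of "T - {v}" T] by blast
    next
      case 2 then show ?thesis using Cons_B Lt_max v by auto
    qed
  qed
qed

lemma B_split_disj: "B (Suc i) (T - {v}) \<inter> (#) v ` B i ((T - {v}) \<union> Nb v) = {}"
  using Cons_B by auto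

lemma sum_B_split:
  "(\<Sum>w\<in>B (Suc i) T. g w) = (\<Sum>w\<in>B (Suc i) (T - {v}). g w) + (\<Sum>y\<in>B i ((T - {v}) \<union> Nb v). g (v # y))"
proof -
  have fin1: "finite (B (Suc i) (T - {v}))" using T by (intro finite_B) auto
  have fin2: "finite (B i ((T - {v}) \<union> Nb v))" using T Nb_sub by (intro finite_B) auto
  have "(\<Sum>w\<in>B (Suc i) T. g w) = (\<Sum>w\<in>B (Suc i) (T - {v}). g w) + (\<Sum>w\<in>(#) v ` B i ((T - {v}) \<union> Nb v). g w)"
    unfolding B_split by (rule sum.union_disjoint[OF fin1 finite_imageI[OF fin2] B_split_disj])
  also have "(\<Sum>w\<in>(#) v ` B i ((T - {v}) \<union> Nb v). g w) = (\<Sum>y\<in>B i ((T - {v}) \<union> Nb v). g (v # y))"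
    by (subst sum.reindex) (auto simp: inj_on_def)
  finally show ?thesis .
qed

end

lemma J_add: "p \<in> Jd \<Longrightarrow> q \<in> Jd \<Longrightarrow> p + q \<in> (Jd :: ('v,'k::field) mpoly set)"
  by (rule gens.ideal_add[OF gens_J])
lemma J_diff: "p \<in> Jd \<Longrightarrow> q \<in> Jd \<Longrightarrow> p - q \<in> (Jd :: ('v,'k::field) mpoly set)"
  by (rule gens.ideal_diff[OF gens_J])
lemma J_uminus: "p \<in> Jd \<Longrightarrow> - p \<in> (Jd :: ('v,'k::field) mpoly set)"
  by (rule gens.ideal_uminus[OF gens_J])
lemma J_mult: "poly_over V r \<Longrightarrow> p \<in> Jd \<Longrightarrow> r * p \<in> (Jd :: ('v,'k::field) mpoly set)"
  by (rule gens.ideal_mult[OF gens_J])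
lemma J_mult2: "poly_over V r \<Longrightarrow> p \<in> Jd \<Longrightarrow> p * r \<in> (Jd :: ('v,'k::field) mpoly set)"
  using J_mult[of r p] by (simp add: mult.commute)
lemma J_sum: "(\<And>i. i \<in> S \<Longrightarrow> f i \<in> Jd) \<Longrightarrow> sum f S \<in> (Jd :: ('v,'k::field) mpoly set)"
  by (rule gens.ideal_sum[OF gens_J])
lemma J_0[simp]: "0 \<in> (Jd :: ('v,'k::field) mpoly set)"
  by (rule gens.ideal_0[OF gens_J])
lemma J_pov: "p \<in> (Jd :: ('v,'k::field) mpoly set) \<Longrightarrow> poly_over V p"
  by (rule gens.ideal_poly_over[OF gens_J])
lemma J_hc: "p \<in> (Jd :: ('v,'k::field) mpoly set) \<Longrightarrow> hc d p \<in> Jd"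
  by (rule gens.ideal_hc[OF gens_J homog_Gs])

lemma jeq_refl[simp]: "jeq y y" by (simp add: jeq_def)

lemma jeq_sym: "jeq y z \<Longrightarrow> jeq z y"
  unfolding jeq_def using J_uminus by (metis minus_diff_eq)

lemma jeq_trans: "jeq x y \<Longrightarrow> jeq y z \<Longrightarrow> jeq x z"
  unfolding jeq_def
proof
  fix w assume "\<forall>w. x w - y w \<in> Jd" "\<forall>w. y w - z w \<in> Jd"
  then have "(x w - y w) + (y w - z w) \<in> Jd" using J_add by blast
  then show "x w - z w \<in> Jd" by simp
qed

lemma jeq_add: "jeq p1 p2 \<Longrightarrow> jeq q1 q2 \<Longrightarrow> jeq (\<lambda>x. p1 x + q1 x) (\<lambda>x. p2 x + q2 x)"
  unfolding jeq_def
proof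
  fix w assume "\<forall>w. p1 w - p2 w \<in> Jd" "\<forall>w. q1 w - q2 w \<in> Jd"
  then have "(p1 w - p2 w) + (q1 w - q2 w) \<in> Jd" using J_add by blast
  then show "p1 w + q1 w - (p2 w + q2 w) \<in> Jd" by (simp add: algebra_simps)
qed

lemma jeq_diff: "jeq p1 p2 \<Longrightarrow> jeq q1 q2 \<Longrightarrow> jeq (\<lambda>x. p1 x - q1 x) (\<lambda>x. p2 x - q2 x)"
  unfolding jeq_def
proof
  fix w assume "\<forall>w. p1 w - p2 w \<in> Jd" "\<forall>w. q1 w - q2 w \<in> Jd"
  then have "(p1 w - p2 w) - (q1 w - q2 w) \<in> Jd" using J_diff by blast
  then show "p1 w - q1 w - (p2 w - q2 w) \<in> Jd" by (simp add: algebra_simps)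
qed

lemma jeq_app:
  assumes "jeq y z" "\<And>w x. w \<in> S \<Longrightarrow> poly_over V (f w x)"
  shows "jeq (app S f y) (app S f z)"
  unfolding jeq_def
proof
  fix x
  have "app S f y x - app S f z x = (\<Sum>w\<in>S. (y w - z w) * f w x)"
    unfolding app_def by (simp add: left_diff_distrib sum_subtractf)
  also have "\<dots> \<in> Jd"
    by (rule J_sum, rule J_mult2) (use assms in \<open>auto simp: jeq_def\<close>)
  finally show "app S f y x - app S f z x \<in> Jd" .
qed

lemma jeq_app2:
  assumes "pov z" "\<And>w. w \<in> S \<Longrightarrow> jeq (f w) (g w)"
  shows "jeq (app S f z) (app S g z)"
  unfolding jeq_def
proof
  fix x
  have "app S f z x - app S g z x = (\<Sum>w\<in>S. z w * (f w x - g w x))"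
    unfolding app_def by (simp add: right_diff_distrib sum_subtractf)
  also have "\<dots> \<in> Jd"
    by (rule J_sum, rule J_mult) (use assms in \<open>auto simp: jeq_def pov_def\<close>)
  finally show "app S f z x - app S g z x \<in> Jd" .
qed

lemma jeq_prefix: "jeq y z \<Longrightarrow> jeq (prefix t y) (prefix t z)"
  unfolding jeq_def
proof
  fix x assume "\<forall>x. y x - z x \<in> Jd"
  then show "prefix t y x - prefix t z x \<in> Jd" by (cases x) auto
qed

lemma jeq_prefix_inv: "jeq (prefix t y) (prefix t z) \<Longrightarrow> jeq y z"
  unfolding jeq_def
proof
  fix x assume "\<forall>x. prefix t y x - prefix t z x \<in> Jd"
  then have "prefix t y (t # x) - prefix t z (t # x) \<in> Jd" by blast
  then show "y x - z x \<in> Jd" by simp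
qed

lemma jeq_eqI: "(\<And>x. y x = z x) \<Longrightarrow> jeq y z"
  by (simp add: jeq_def)

lemma jeq_cong: "jeq y z \<Longrightarrow> (\<And>x. y x = y' x) \<Longrightarrow> (\<And>x. z x = z' x) \<Longrightarrow> jeq y' z'"
  by (simp add: jeq_def)

lemma lin_pov: "lin y \<Longrightarrow> pov y" by (simp add: lin_def pov_def)

lemma pov_app: "pov z \<Longrightarrow> (\<And>w x. w \<in> S \<Longrightarrow> poly_over V (f w x)) \<Longrightarrow> pov (app S f z)"
  unfolding pov_def app_def by (auto intro!: poly_over_sum poly_over_mult)

lemma homog_app: "(\<And>w. w \<in> S \<Longrightarrow> homog d1 (z w)) \<Longrightarrow> (\<And>w. w \<in> S \<Longrightarrow> homog d2 (f w x)) \<Longrightarrow> homog (d1 + d2) (app S f z x)"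
  unfolding app_def by (auto intro!: homog_sum homog_mult)

lemma graded_fix:
  assumes S: "finite S" and f: "\<And>w. w \<in> S \<Longrightarrow> lin (f w)" and y: "pov y"
    and z: "\<And>x. homog (Suc d) (z x)" and eq: "jeq (app S f y) z"
  shows "jeq (app S f (\<lambda>w. hc d (y w))) z"
  unfolding jeq_def
proof
  fix x
  have "hc (Suc d) (app S f y x - z x) \<in> Jd" using eq J_hc unfolding jeq_def by blast
  moreover have "hc (Suc d) (app S f y x - z x) = app S f (\<lambda>w. hc d (y w)) x - z x"
  proof -
    have "hc (Suc d) (app S f y x) = app S f (\<lambda>w. hc d (y w)) x"
      unfolding app_def hc_sum
    proof (rule sum.cong)
      fix w assume w: "w \<in> S"
      have "homog 1 (f w x)" using f[OF w] by (simp add: lin_def)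
      from hc_mult[OF this, of "Suc d" "y w"]
      show "hc (Suc d) (y w * f w x) = hc d (y w) * f w x" by (simp add: mult.commute)
    qed simp
    then show ?thesis using hc_same[OF z] by (simp add: hc_diff)
  qed
  ultimately show "app S f (\<lambda>w. hc d (y w)) x - z x \<in> Jd" by simp
qed

end

context kz
begin

definition spec :: "nat \<Rightarrow> ('v set \<Rightarrow> 'v list \<Rightarrow> 'v list \<Rightarrow> ('v,'k::field) mpoly) \<Rightarrow>
    ('v set \<Rightarrow> 'v \<Rightarrow> 'v list \<Rightarrow> 'v list \<Rightarrow> ('v,'k) mpoly) \<Rightarrow> 'v set \<Rightarrow> 'v \<Rightarrow> 'v list \<Rightarrow>
    ('v list \<Rightarrow> ('v,'k) mpoly) \<Rightarrow> bool" where
  "spec k Dx Px T v w y \<longleftrightarrow> vecin (B k T) y \<and> lin y \<and>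
     jeq (app (B k T) (Dx T) y) (app (B (k - 1) (T \<union> Nb v)) (Px T v) (Dx (T \<union> Nb v) w))"

definition dstep :: "('v set \<Rightarrow> 'v list \<Rightarrow> 'v list \<Rightarrow> ('v,'k::field) mpoly) \<Rightarrow>
    ('v set \<Rightarrow> 'v \<Rightarrow> 'v list \<Rightarrow> 'v list \<Rightarrow> ('v,'k) mpoly) \<Rightarrow> 'v set \<Rightarrow> 'v list \<Rightarrow> 'v list \<Rightarrow> ('v,'k) mpoly" where
  "dstep Dx Px T w = (case w of [] \<Rightarrow> (\<lambda>x. 0)
      | t # w' \<Rightarrow> (\<lambda>x. Px (Lt T t) t w' x - prefix t (Dx (Lt T t \<union> Nb t) w') x))"

primrec stg :: "nat \<Rightarrow> ('v set \<Rightarrow> 'v list \<Rightarrow> 'v list \<Rightarrow> ('v,'k::field) mpoly) \<times>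
    ('v set \<Rightarrow> 'v \<Rightarrow> 'v list \<Rightarrow> 'v list \<Rightarrow> ('v,'k) mpoly)" where
  "stg 0 = ((\<lambda>T w x. 0), (\<lambda>T v w x. if x = [] then var v else 0))"
| "stg (Suc i) = (dstep (fst (stg i)) (snd (stg i)),
     (\<lambda>T v w. SOME y. spec (Suc i) (dstep (fst (stg i)) (snd (stg i))) (snd (stg i)) T v w y))"

definition Dn :: "nat \<Rightarrow> 'v set \<Rightarrow> 'v list \<Rightarrow> 'v list \<Rightarrow> ('v,'k::field) mpoly" where
  "Dn i = fst (stg i)"

definition Pn :: "nat \<Rightarrow> 'v set \<Rightarrow> 'v \<Rightarrow> 'v list \<Rightarrow> 'v list \<Rightarrow> ('v,'k::field) mpoly" where
  "Pn i = snd (stg i)"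

lemma Dn_0[simp]: "Dn 0 T w x = 0" by (simp add: Dn_def)
lemma Dn_0'[simp]: "Dn 0 T w = (\<lambda>x. 0)" by (simp add: Dn_def)
lemma prefix_zero[simp]: "prefix t (\<lambda>x. 0) x = 0" by (cases x) auto

lemma Pn_0: "Pn 0 T v w x = (if x = [] then var v else 0)" by (simp add: Pn_def)

lemma Dn_Suc_Cons: "Dn (Suc i) T (t # w) x = Pn i (Lt T t) t w x - prefix t (Dn i (Lt T t \<union> Nb t) w) x"
  by (simp add: Dn_def Pn_def dstep_def)

lemma Pn_Suc: "Pn (Suc i) T v w = (SOME y. spec (Suc i) (Dn (Suc i)) (Pn i) T v w y)"
  by (simp add: Dn_def Pn_def)

lemma Pn_spec:
  assumes "\<exists>y :: _ \<Rightarrow> ('v,'k::field) mpoly. spec (Suc i) (Dn (Suc i)) (Pn i) T v w y"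
  shows "spec (Suc i) (Dn (Suc i)) (Pn i) T v w (Pn (Suc i) T v w :: _ \<Rightarrow> ('v,'k) mpoly)"
  unfolding Pn_Suc by (rule someI_ex[OF assms])

lemma Dn_loc: "Lt T s = Lt T' s \<Longrightarrow> (Dn i T (s # y) :: _ \<Rightarrow> ('v,'k::field) mpoly) = Dn i T' (s # y)"
  by (cases i) (auto simp: Dn_Suc_Cons fun_eq_iff)

lemma Dn_1: "Dn (Suc 0) T [s] x = (if x = [] then var s else 0)"
  by (simp add: Dn_Suc_Cons Pn_0)

lemma homog_var1[simp]: "homog (Suc 0) (var v :: ('a,'b::comm_ring_1) mpoly)"
  using homog_var[of v] by simp

lemma lin_diff: "lin y \<Longrightarrow> lin z \<Longrightarrow> lin (\<lambda>x. y x - z x)"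
  unfolding lin_def by (auto intro: poly_over_diff homog_diff)

lemma lin_prefix: "lin y \<Longrightarrow> lin (prefix t y)"
  unfolding lin_def
proof
  fix x assume "\<forall>x. poly_over V (y x) \<and> homog 1 (y x)"
  then show "poly_over V (prefix t y x) \<and> homog 1 (prefix t y x)" by (cases x) auto
qed

lemma lin_zero: "lin (\<lambda>x. 0)" by (simp add: lin_def)

lemma pov_zero: "pov (\<lambda>x. 0)" by (simp add: pov_def)

lemma vecin_prefix: "vecin S z \<Longrightarrow> (\<And>y. y \<in> S \<Longrightarrow> t # y \<in> S') \<Longrightarrow> vecin S' (prefix t z)"
  unfolding vecin_def
proof (intro allI impI)
  fix x assume z: "\<forall>x. x \<notin> S \<longrightarrow> z x = 0" and S: "\<And>y. y \<in> S \<Longrightarrow> t # y \<in> S'" and x: "x \<notin> S'"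
  show "prefix t z x = 0"
  proof (cases x)
    case (Cons s y)
    then show ?thesis using z S x by auto
  qed simp
qed

lemma vecin_diff: "vecin S y \<Longrightarrow> vecin S z \<Longrightarrow> vecin S (\<lambda>x. y x - (z x :: 'a::ab_group_add))"
  unfolding vecin_def by auto

lemma vecin_mono: "vecin S y \<Longrightarrow> S \<subseteq> S' \<Longrightarrow> vecin S' y"
  unfolding vecin_def by auto

lemma vecin_app: "(\<And>w. w \<in> S \<Longrightarrow> vecin S' (f w)) \<Longrightarrow> vecin S' (app S f z)"
  unfolding vecin_def app_def by auto

definition AA :: "nat \<Rightarrow> bool" where
  "AA i \<longleftrightarrow> (\<forall>T. T \<subseteq> V \<longrightarrow> (\<forall>w\<in>B i T. vecin (B (i - 1) T) (Dn i T w :: _ \<Rightarrow> ('v,'k) mpoly) \<and> lin (Dn i T w :: _ \<Rightarrow> ('v,'k) mpoly)))"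

definition PP :: "nat \<Rightarrow> bool" where
  "PP i \<longleftrightarrow> (\<forall>T v. T \<subseteq> V \<longrightarrow> v \<in> V \<longrightarrow> v \<notin> T \<longrightarrow> (\<forall>w\<in>B i (T \<union> Nb v).
      vecin (B i T) (Pn i T v w :: _ \<Rightarrow> ('v,'k) mpoly) \<and> lin (Pn i T v w :: _ \<Rightarrow> ('v,'k) mpoly) \<and>
      (1 \<le> i \<longrightarrow> jeq (app (B i T) (Dn i T) (Pn i T v w :: _ \<Rightarrow> ('v,'k) mpoly))
                      (app (B (i - 1) (T \<union> Nb v)) (Pn (i - 1) T v) (Dn i (T \<union> Nb v) w)))))"

definition CC :: "nat \<Rightarrow> bool" where
  "CC i \<longleftrightarrow> (\<forall>T. T \<subseteq> V \<longrightarrow> (\<forall>w\<in>B (Suc i) T.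
      jeq (app (B i T) (Dn i T) (Dn (Suc i) T w :: _ \<Rightarrow> ('v,'k) mpoly)) (\<lambda>x. 0)))"

definition EE :: "nat \<Rightarrow> bool" where
  "EE i \<longleftrightarrow> (\<forall>T (u :: _ \<Rightarrow> ('v,'k) mpoly). T \<subseteq> V \<longrightarrow> vecin (B i T) u \<longrightarrow> pov u \<longrightarrow>
      jeq (app (B i T) (Dn i T) u) (\<lambda>x. 0) \<longrightarrow>
      (\<exists>w. vecin (B (Suc i) T) w \<and> pov w \<and> jeq u (app (B (Suc i) T) (Dn (Suc i) T) w)))"

lemma L_A0: "AA 0"
  unfolding AA_def vecin_def lin_def by simp

lemma L_C0: "CC 0"
  unfolding CC_def jeq_def app_def by simp

lemma L_P0: "PP 0"
  unfolding PP_def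
proof (intro allI impI ballI conjI)
  fix T v w assume v: "v \<in> V"
  show "vecin (B 0 T) (Pn 0 T v w :: _ \<Rightarrow> ('v,'k) mpoly)" by (simp add: vecin_def Pn_0)
  show "lin (Pn 0 T v w :: _ \<Rightarrow> ('v,'k) mpoly)" using v by (auto simp: lin_def Pn_0)
qed simp

lemma L_A:
  assumes P: "PP i" and A: "AA i"
  shows "AA (Suc i)"
  unfolding AA_def
proof (intro allI impI ballI)
  fix T w assume T: "T \<subseteq> V" and w: "w \<in> B (Suc i) T"
  then obtain t y where ty: "w = t # y" using Nil_B by (cases w) auto
  then have t: "t \<in> T" and y: "y \<in> B i (Lt T t \<union> Nb t)" using w Cons_B by auto
  let ?T' = "Lt T t" let ?U = "Lt T t \<union> Nb t"
  have T': "?T' \<subseteq> V" using Lt_sub T by blast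
  have U: "?U \<subseteq> V" using T' Nb_sub by blast
  have tV: "t \<in> V" "t \<notin> ?T'" using t T by (auto simp: Lt_def)
  from P[unfolded PP_def, rule_format, OF T' tV y]
  have p1: "vecin (B i ?T') (Pn i ?T' t y :: _ \<Rightarrow> ('v,'k) mpoly)" "lin (Pn i ?T' t y :: _ \<Rightarrow> ('v,'k) mpoly)" by auto
  from A[unfolded AA_def, rule_format, OF U y]
  have d1: "vecin (B (i - 1) ?U) (Dn i ?U y :: _ \<Rightarrow> ('v,'k) mpoly)" "lin (Dn i ?U y :: _ \<Rightarrow> ('v,'k) mpoly)" by auto
  have eq: "Dn (Suc i) T w = (\<lambda>x. Pn i ?T' t y x - prefix t (Dn i ?U y) x)"
    unfolding ty by (simp add: fun_eq_iff Dn_Suc_Cons)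
  have v1: "vecin (B i T) (Pn i ?T' t y :: _ \<Rightarrow> ('v,'k) mpoly)"
    by (rule vecin_mono[OF p1(1) B_mono[OF Lt_sub]])
  have v2: "vecin (B i T) (prefix t (Dn i ?U y) :: _ \<Rightarrow> ('v,'k) mpoly)"
  proof (cases i)
    case 0 then show ?thesis by (simp add: vecin_def prefix_def split: list.splits)
  next
    case (Suc j)
    show ?thesis
    proof (rule vecin_prefix[OF d1(1)])
      fix z assume "z \<in> B (i - 1) ?U"
      then show "t # z \<in> B i T" using Suc t Cons_B by auto
    qed
  qed
  show "vecin (B (Suc i - 1) T) (Dn (Suc i) T w :: _ \<Rightarrow> ('v,'k) mpoly) \<and> lin (Dn (Suc i) T w :: _ \<Rightarrow> ('v,'k) mpoly)"
    unfolding eq using vecin_diff[OF v1 v2] lin_diff[OF p1(2) lin_prefix[OF d1(2)]] by simp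
qed

lemma L_C:
  assumes A: "AA (Suc i)" and P: "PP (Suc i)" and C: "CC i"
  shows "CC (Suc i)"
  unfolding CC_def
proof (intro allI impI ballI)
  fix T w assume T: "T \<subseteq> V" and w: "w \<in> B (Suc (Suc i)) T"
  then obtain t w' where tw: "w = t # w'" using Nil_B by (cases w) auto
  then have t: "t \<in> T" and w': "w' \<in> B (Suc i) (Lt T t \<union> Nb t)" using w Cons_B by auto
  define T' where "T' = Lt T t"
  define U where "U = Lt T t \<union> Nb t"
  have T': "T' \<subseteq> V" using Lt_sub T unfolding T'_def by blast
  have U: "U \<subseteq> V" using T' Nb_sub unfolding U_def T'_def by blast
  have tV: "t \<in> V" "t \<notin> T'" using t T by (auto simp: Lt_def T'_def)
  have UU: "U = T' \<union> Nb t" unfolding U_def T'_def ..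
  have w'U: "w' \<in> B (Suc i) (T' \<union> Nb t)" using w' unfolding UU[symmetric] U_def .
  define Pw where "Pw = (Pn (Suc i) T' t w' :: _ \<Rightarrow> ('v,'k) mpoly)"
  define z where "z = (Dn (Suc i) U w' :: _ \<Rightarrow> ('v,'k) mpoly)"
  from P[unfolded PP_def, rule_format, OF T' tV w'U]
  have p1: "vecin (B (Suc i) T') Pw" "jeq (app (B (Suc i) T') (Dn (Suc i) T') Pw) (app (B i U) (Pn i T' t) z)"
    unfolding Pw_def z_def UU by auto
  from A[unfolded AA_def, rule_format, OF U] w'
  have vz: "vecin (B i U) z" unfolding z_def U_def by auto
  from C[unfolded CC_def, rule_format, OF U] w'
  have cz: "jeq (app (B i U) (Dn i U) z) (\<lambda>x. 0)" unfolding z_def U_def by auto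
  have finB: "finite (B (Suc i) T)" using T by (rule finite_B)
  have X1: "app (B (Suc i) T) (Dn (Suc i) T) Pw x = app (B (Suc i) T') (Dn (Suc i) T') Pw x" for x
  proof -
    have "app (B (Suc i) T) (Dn (Suc i) T) Pw x = app (B (Suc i) T') (Dn (Suc i) T) Pw x"
      by (rule app_mono_neutral[OF finB B_mono[OF Lt_sub[of T t, folded T'_def]] p1(1)])
    also have "\<dots> = app (B (Suc i) T') (Dn (Suc i) T') Pw x"
    proof (rule app_cong)
      fix y assume y: "y \<in> B (Suc i) T'"
      then obtain s y' where sy: "y = s # y'" using Nil_B by (cases y) auto
      then have "s \<in> T'" using y Cons_B by auto
      then have "Lt T s = Lt T' s" unfolding T'_def using Lt_Lt by auto
      then show "Dn (Suc i) T y x = Dn (Suc i) T' y x" unfolding sy using Dn_loc by metis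
    qed
    finally show ?thesis .
  qed
  have X2: "app (B (Suc i) T) (Dn (Suc i) T) (prefix t z) x =
      app (B i U) (Pn i T' t) z x - prefix t (app (B i U) (Dn i U) z) x" for x
  proof -
    have sub: "(#) t ` B i U \<subseteq> B (Suc i) T" using t Cons_B unfolding U_def by auto
    have "app (B (Suc i) T) (Dn (Suc i) T) (prefix t z) x = (\<Sum>y\<in>B i U. z y * Dn (Suc i) T (t # y) x)"
      by (rule app_prefix[OF finB sub vz])
    also have "\<dots> = (\<Sum>y\<in>B i U. z y * Pn i T' t y x - z y * prefix t (Dn i U y) x)"
      by (rule sum.cong) (simp_all add: Dn_Suc_Cons T'_def U_def right_diff_distrib)
    also have "\<dots> = app (B i U) (Pn i T' t) z x - prefix t (app (B i U) (Dn i U) z) x"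
      by (simp add: sum_subtractf sum_prefix app_def[abs_def])
    finally show ?thesis .
  qed
  have eqw: "Dn (Suc (Suc i)) T w = (\<lambda>x. Pw x - prefix t z x)"
    by (simp add: fun_eq_iff tw Dn_Suc_Cons Pw_def z_def T'_def U_def)
  show "jeq (app (B (Suc i) T) (Dn (Suc i) T) (Dn (Suc (Suc i)) T w)) (\<lambda>x. 0)"
    unfolding jeq_def
  proof
    fix x
    have "app (B (Suc i) T) (Dn (Suc i) T) (Dn (Suc (Suc i)) T w) x =
        app (B (Suc i) T) (Dn (Suc i) T) Pw x - app (B (Suc i) T) (Dn (Suc i) T) (prefix t z) x"
      unfolding eqw by (rule app_diff_vec)
    also have "\<dots> = (app (B (Suc i) T') (Dn (Suc i) T') Pw x - app (B i U) (Pn i T' t) z x)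
        + prefix t (app (B i U) (Dn i U) z) x"
      using X1 X2 by simp
    also have "\<dots> \<in> Jd"
    proof (rule J_add)
      show "app (B (Suc i) T') (Dn (Suc i) T') Pw x - app (B i U) (Pn i T' t) z x \<in> Jd"
        using p1(2) unfolding jeq_def by blast
      have "\<forall>y. app (B i U) (Dn i U) z y \<in> Jd" using cz unfolding jeq_def by simp
      then show "prefix t (app (B i U) (Dn i U) z) x \<in> Jd" by (cases x) auto
    qed
    finally show "app (B (Suc i) T) (Dn (Suc i) T) (Dn (Suc (Suc i)) T w) x - 0 \<in> Jd" by simp
  qed
qed

lemma app_B0: "app {[]} f z x = z [] * f [] x"
  by (simp add: app_def)

lemma J_Gs: "x \<in> V \<Longrightarrow> y \<in> V \<Longrightarrow> E x y \<or> E y x \<Longrightarrow> var x * var y \<in> Jd"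
proof -
  assume xy: "x \<in> V" "y \<in> V" "E x y \<or> E y x"
  have "var x * var y \<in> Gs \<or> var y * var x \<in> Gs" using xy unfolding Gs_def by blast
  then have "var x * var y \<in> Gs" by (auto simp: mult.commute)
  then show ?thesis by (rule gens.ideal_gen[OF gens_J])
qed

lemma L_P:
  assumes A0: "AA i" and A1: "AA (Suc i)" and P: "PP i" and C: "CC i"
    and E: "1 \<le> i \<Longrightarrow> EE i" and Pm: "1 \<le> i \<Longrightarrow> PP (i - 1)"
  shows "PP (Suc i)"
  unfolding PP_def
proof (intro allI impI ballI)
  fix T v w assume T: "T \<subseteq> V" and v: "v \<in> V" and vT: "v \<notin> T" and w: "w \<in> B (Suc i) (T \<union> Nb v)"
  define U where "U = T \<union> Nb v"
  have U: "U \<subseteq> V" using T Nb_sub unfolding U_def by blast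
  have ex: "\<exists>y :: _ \<Rightarrow> ('v,'k) mpoly. spec (Suc i) (Dn (Suc i)) (Pn i) T v w y"
  proof (cases i)
    case 0
    then obtain s where s: "w = [s]" "s \<in> U" using w B_1 unfolding U_def by auto
    define r where "r = app (B 0 U) (Pn 0 T v) (Dn (Suc 0) U [s] :: _ \<Rightarrow> ('v,'k) mpoly)"
    have r: "r x = (if x = [] then var s * var v else 0)" for x
      unfolding r_def B_0 app_B0 by (simp add: Dn_1 Pn_0)
    show ?thesis
    proof (cases "s \<in> T")
      case True
      define y where "y = (\<lambda>x. if x = [s] then var v else (0 :: ('v,'k) mpoly))"
      have sB: "[s] \<in> B (Suc 0) T" using True B_1 by auto
      have "app (B (Suc 0) T) (Dn (Suc 0) T) y x = r x" for x
      proof -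
        have "app (B (Suc 0) T) (Dn (Suc 0) T) y x = (\<Sum>w\<in>B (Suc 0) T. if w = [s] then var v * Dn (Suc 0) T w x else 0)"
          unfolding app_def y_def by (rule sum.cong) auto
        also have "\<dots> = var v * Dn (Suc 0) T [s] x" using sB finite_B[OF T] by (simp add: sum.delta)
        finally show ?thesis using r by (simp add: Dn_1 mult.commute)
      qed
      then have "jeq (app (B (Suc 0) T) (Dn (Suc 0) T) y) r" by (intro jeq_eqI)
      moreover have "vecin (B (Suc 0) T) y" using sB by (simp add: vecin_def y_def)
      moreover have "lin y" using v by (simp add: lin_def y_def poly_over_var)
      ultimately have "spec (Suc 0) (Dn (Suc 0)) (Pn 0) T v w y"
        unfolding spec_def r_def s(1) U_def by simp
      then show ?thesis using 0 by blast
    next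
      case False
      then have sN: "s \<in> Nb v" using s unfolding U_def by blast
      then have "s \<in> V" "E v s \<or> E s v" unfolding Nb_def by auto
      then have sv: "var s * var v \<in> (Jd :: ('v,'k) mpoly set)" using J_Gs v by blast
      have "jeq (app (B (Suc 0) T) (Dn (Suc 0) T) (\<lambda>x. 0)) r"
        unfolding jeq_def using sv r by (simp add: J_uminus)
      moreover have "vecin (B (Suc 0) T) (\<lambda>x. 0 :: ('v,'k) mpoly)" by (simp add: vecin_def)
      ultimately have "spec (Suc 0) (Dn (Suc 0)) (Pn 0) T v w (\<lambda>x. 0)"
        unfolding spec_def r_def s(1) U_def by (simp add: lin_zero)
      then show ?thesis using 0 by blast
    qed
  next
    case (Suc j)
    have i1: "1 \<le> i" using Suc by simp
    define D where "D = (Dn (Suc i) U w :: _ \<Rightarrow> ('v,'k) mpoly)"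
    define z where "z = app (B i U) (Pn i T v) D"
    have wU: "w \<in> B (Suc i) U" using w unfolding U_def .
    have lD: "lin D" and vD: "vecin (B i U) D"
      using A1[unfolded AA_def, rule_format, OF U wU] unfolding D_def by auto
    have Pi: "vecin (B i T) (Pn i T v y :: _ \<Rightarrow> ('v,'k) mpoly) \<and> lin (Pn i T v y :: _ \<Rightarrow> ('v,'k) mpoly) \<and>
        jeq (app (B i T) (Dn i T) (Pn i T v y :: _ \<Rightarrow> ('v,'k) mpoly)) (app (B j U) (Pn j T v) (Dn i U y))"
      if "y \<in> B i U" for y
      using P[unfolded PP_def, rule_format, OF T v vT, of y] that i1 Suc unfolding U_def by auto
    have Pj: "lin (Pn j T v y :: _ \<Rightarrow> ('v,'k) mpoly)" if "y \<in> B j U" for y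
      using Pm[OF i1, unfolded PP_def, rule_format, OF T v vT, of y] that Suc unfolding U_def by auto
    have vz: "vecin (B i T) z" unfolding z_def by (rule vecin_app) (use Pi in blast)
    have pz: "pov z" unfolding z_def
      by (rule pov_app[OF lin_pov[OF lD]]) (use Pi in \<open>auto simp: lin_def\<close>)
    have hz: "homog (Suc 1) (z x)" for x
    proof -
      have "homog (1 + 1) (z x)" unfolding z_def
        by (rule homog_app) (use lD Pi in \<open>auto simp: lin_def\<close>)
      then show ?thesis by simp
    qed
    have jz: "jeq (app (B i T) (Dn i T) z) (\<lambda>x. 0)"
    proof -
      have s1: "app (B i T) (Dn i T) z x = app (B i U) (\<lambda>y. app (B i T) (Dn i T) (Pn i T v y)) D x" for x
        unfolding z_def by (rule app_comp)
      have s2: "jeq (app (B i U) (\<lambda>y. app (B i T) (Dn i T) (Pn i T v y)) D)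
                    (app (B i U) (\<lambda>y. app (B j U) (Pn j T v) (Dn i U y)) D)"
        by (rule jeq_app2[OF lin_pov[OF lD]]) (use Pi in blast)
      have s3: "app (B i U) (\<lambda>y. app (B j U) (Pn j T v) (Dn i U y)) D x = app (B j U) (Pn j T v) (app (B i U) (Dn i U) D) x" for x
        by (rule app_comp[symmetric])
      have cD: "jeq (app (B i U) (Dn i U) D) (\<lambda>x. 0)"
        using C[unfolded CC_def, rule_format, OF U wU] unfolding D_def .
      have s4: "jeq (app (B j U) (Pn j T v) (app (B i U) (Dn i U) D)) (app (B j U) (Pn j T v) (\<lambda>x. 0))"
        by (rule jeq_app[OF cD]) (use Pj in \<open>auto simp: lin_def\<close>)
      have s5: "app (B j U) (Pn j T v) (\<lambda>x. 0) x = 0" for x by simp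
      have "jeq (app (B i T) (Dn i T) z) (app (B j U) (Pn j T v) (app (B i U) (Dn i U) D))"
        using jeq_cong[OF s2, of "app (B i T) (Dn i T) z", OF s1[symmetric] s3] .
      from jeq_trans[OF this s4] show ?thesis using s5 by (simp add: jeq_def)
    qed
    from E[OF i1, unfolded EE_def, rule_format, OF T vz pz jz]
    obtain w0 where w0: "vecin (B (Suc i) T) w0" "pov w0" "jeq z (app (B (Suc i) T) (Dn (Suc i) T) w0)"
      by blast
    define y where "y = (\<lambda>x. hc 1 (w0 x))"
    have "jeq (app (B (Suc i) T) (Dn (Suc i) T) y) z"
      unfolding y_def
    proof (rule graded_fix[OF finite_B[OF T] _ w0(2) hz jeq_sym[OF w0(3)]])
      fix x assume "x \<in> B (Suc i) T"
      then show "lin (Dn (Suc i) T x)" using A1[unfolded AA_def, rule_format, OF T] by blast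
    qed
    moreover have "vecin (B (Suc i) T) y" using w0(1) unfolding y_def vecin_def by simp
    moreover have "lin y" using w0(2) unfolding y_def lin_def pov_def by auto
    ultimately have "spec (Suc i) (Dn (Suc i)) (Pn i) T v w y"
      unfolding spec_def z_def D_def U_def by simp
    then show ?thesis by blast
  qed
  from Pn_spec[OF ex]
  show "vecin (B (Suc i) T) (Pn (Suc i) T v w) \<and> lin (Pn (Suc i) T v w) \<and>
       (1 \<le> Suc i \<longrightarrow> jeq (app (B (Suc i) T) (Dn (Suc i) T) (Pn (Suc i) T v w))
          (app (B (Suc i - 1) (T \<union> Nb v)) (Pn (Suc i - 1) T v) (Dn (Suc i) (T \<union> Nb v) w)))"
    unfolding spec_def by simp
qed

end

context kz
begin

lemma sum_B1: "(\<Sum>w\<in>B (Suc 0) S. f w) = (\<Sum>s\<in>S. f [s])"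
  unfolding B_1 by (subst sum.reindex) (auto simp: inj_on_def)

lemma app_vec_cong: "(\<And>w. w \<in> S \<Longrightarrow> y w = z w) \<Longrightarrow> app S f y x = app S f z x"
  unfolding app_def by (rule sum.cong) auto

context
  fixes T v assumes T: "T \<subseteq> V" and v: "v \<in> T" and vmax: "\<And>u. u \<in> T \<Longrightarrow> rk u \<le> rk v"
begin

lemma decompF:
  "app (B (Suc i) T) (Dn (Suc i) T) u x =
     app (B (Suc i) (T - {v})) (Dn (Suc i) (T - {v})) u x
     + app (B i ((T - {v}) \<union> Nb v)) (Pn i (T - {v}) v) (\<lambda>y. u (v # y)) x
     - prefix v (app (B i ((T - {v}) \<union> Nb v)) (Dn i ((T - {v}) \<union> Nb v)) (\<lambda>y. u (v # y))) x"
proof -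
  have "app (B (Suc i) T) (Dn (Suc i) T) u x =
      (\<Sum>w\<in>B (Suc i) (T - {v}). u w * Dn (Suc i) T w x) + (\<Sum>y\<in>B i ((T - {v}) \<union> Nb v). u (v # y) * Dn (Suc i) T (v # y) x)"
    unfolding app_def by (rule sum_B_split[OF T v vmax])
  also have "(\<Sum>w\<in>B (Suc i) (T - {v}). u w * Dn (Suc i) T w x) = app (B (Suc i) (T - {v})) (Dn (Suc i) (T - {v})) u x"
    unfolding app_def
  proof (rule sum.cong)
    fix w assume w: "w \<in> B (Suc i) (T - {v})"
    then obtain s y where sy: "w = s # y" using Nil_B by (cases w) auto
    then have "s \<in> T - {v}" using w Cons_B by auto
    then have "Lt T s = Lt (T - {v}) s" using Lt_rem[OF T v vmax] by auto
    then show "u w * Dn (Suc i) T w x = u w * Dn (Suc i) (T - {v}) w x" unfolding sy using Dn_loc by metis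
  qed simp
  also have "(\<Sum>y\<in>B i ((T - {v}) \<union> Nb v). u (v # y) * Dn (Suc i) T (v # y) x) =
      (\<Sum>y\<in>B i ((T - {v}) \<union> Nb v). u (v # y) * Pn i (T - {v}) v y x - u (v # y) * prefix v (Dn i ((T - {v}) \<union> Nb v) y) x)"
    by (rule sum.cong) (simp_all add: Dn_Suc_Cons Lt_max[OF T v vmax] right_diff_distrib)
  also have "\<dots> = app (B i ((T - {v}) \<union> Nb v)) (Pn i (T - {v}) v) (\<lambda>y. u (v # y)) x
     - prefix v (app (B i ((T - {v}) \<union> Nb v)) (Dn i ((T - {v}) \<union> Nb v)) (\<lambda>y. u (v # y))) x"
    by (simp add: sum_subtractf sum_prefix app_def[abs_def])
  finally show ?thesis by simp
qed

lemma decompH: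
  assumes vb: "vecin (B (Suc i) ((T - {v}) \<union> Nb v)) \<beta>"
  shows "app (B (Suc (Suc i)) T) (Dn (Suc (Suc i)) T) (\<lambda>x. - prefix v \<beta> x) x =
     - app (B (Suc i) ((T - {v}) \<union> Nb v)) (Pn (Suc i) (T - {v}) v) \<beta> x
     + prefix v (app (B (Suc i) ((T - {v}) \<union> Nb v)) (Dn (Suc i) ((T - {v}) \<union> Nb v)) \<beta>) x"
proof -
  let ?U = "(T - {v}) \<union> Nb v"
  have sub: "(#) v ` B (Suc i) ?U \<subseteq> B (Suc (Suc i)) T" using v Cons_B Lt_max[OF T v vmax] by auto
  have "app (B (Suc (Suc i)) T) (Dn (Suc (Suc i)) T) (prefix v \<beta>) x = (\<Sum>y\<in>B (Suc i) ?U. \<beta> y * Dn (Suc (Suc i)) T (v # y) x)"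
    by (rule app_prefix[OF finite_B[OF T] sub vb])
  also have "\<dots> = (\<Sum>y\<in>B (Suc i) ?U. \<beta> y * Pn (Suc i) (T - {v}) v y x - \<beta> y * prefix v (Dn (Suc i) ?U y) x)"
    by (rule sum.cong) (simp_all add: Dn_Suc_Cons Lt_max[OF T v vmax] right_diff_distrib)
  also have "\<dots> = app (B (Suc i) ?U) (Pn (Suc i) (T - {v}) v) \<beta> x - prefix v (app (B (Suc i) ?U) (Dn (Suc i) ?U) \<beta>) x"
    by (simp add: sum_subtractf sum_prefix app_def[abs_def])
  finally show ?thesis using app_uminus_vec[of "B (Suc (Suc i)) T" "Dn (Suc (Suc i)) T" "prefix v \<beta>" x] by simp
qed

lemma u_split:
  assumes "vecin (B (Suc i) T) (u :: _ \<Rightarrow> ('v,'k) mpoly)"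
  shows "u x = (if x \<in> B (Suc i) (T - {v}) then u x else 0) + prefix v (\<lambda>y. u (v # y)) x"
proof (cases x)
  case Nil
  then show ?thesis using assms Nil_B unfolding vecin_def by auto
next
  case (Cons s y)
  show ?thesis
  proof (cases "s = v")
    case True
    then have "x \<notin> B (Suc i) (T - {v})" using Cons Cons_B by auto
    then show ?thesis using Cons True by simp
  next
    case False
    have "x \<in> B (Suc i) T \<Longrightarrow> x \<in> B (Suc i) (T - {v})" using B_split[OF T v vmax, of i] Cons False by auto
    then show ?thesis using assms False Cons unfolding vecin_def by auto
  qed
qed

lemma beta0:
  assumes vu: "vecin (B (Suc 0) T) (u :: _ \<Rightarrow> ('v,'k) mpoly)" and pu: "pov u"
    and hu: "jeq (app (B (Suc 0) T) (Dn (Suc 0) T) u) (\<lambda>x. 0)"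
  shows "\<exists>\<beta>. vecin (B (Suc 0) ((T - {v}) \<union> Nb v)) \<beta> \<and> pov \<beta> \<and>
      jeq (\<lambda>y. u (v # y)) (app (B (Suc 0) ((T - {v}) \<union> Nb v)) (Dn (Suc 0) ((T - {v}) \<union> Nb v)) \<beta>)"
proof -
  define T' where "T' = T - {v}"
  define U where "U = T' \<union> Nb v"
  have T': "T' \<subseteq> V" using T unfolding T'_def by blast
  have U: "U \<subseteq> V" using T' Nb_sub unfolding U_def by blast
  have vV: "v \<in> V" "v \<notin> T'" using v T unfolding T'_def by auto
  have finT: "finite T" using T finV finite_subset by blast
  have "app (B (Suc 0) T) (Dn (Suc 0) T) u [] \<in> Jd" using hu unfolding jeq_def by (metis diff_zero)
  moreover have "app (B (Suc 0) T) (Dn (Suc 0) T) u [] = (\<Sum>s\<in>T. u [s] * var s)"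
    unfolding app_def sum_B1 by (simp add: Dn_1)
  moreover have "(\<Sum>s\<in>T. u [s] * var s) = u [v] * var v + (\<Sum>s\<in>T'. u [s] * var s)"
    unfolding T'_def using finT v by (simp add: sum.remove)
  ultimately have "var v * u [v] - (\<Sum>s\<in>T'. (- u [s]) * var s) \<in> Jd"
    by (simp add: mult.commute sum_negf)
  then have ex: "\<exists>c. (\<forall>t. poly_over V (c t)) \<and> var v * u [v] - (\<Sum>s\<in>T'. c s * var s) \<in> Jd"
    using pu unfolding pov_def by (intro exI[of _ "\<lambda>s. - u [s]"]) (simp add: poly_over_uminus)
  have pv: "poly_over V (var v * u [v])" using pu vV by (simp add: pov_def poly_over_mult poly_over_var)
  have "var v * u [v] \<in> Id T'" by (rule Id_E0[OF T' pv, THEN iffD2, OF ex])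
  moreover have puv: "poly_over V (u [v])" using pu unfolding pov_def by blast
  ultimately have "u [v] \<in> Id U" unfolding U_def using colon[OF T' vV] by blast
  moreover note puv
  ultimately have "\<exists>c. (\<forall>t. poly_over V (c t)) \<and> u [v] - (\<Sum>t\<in>U. c t * var t) \<in> Jd"
    using Id_E0[OF U] by blast
  then obtain c where c: "\<forall>t. poly_over V (c t)" "u [v] - (\<Sum>t\<in>U. c t * var t) \<in> Jd"
    by blast
  define \<beta> where "\<beta> = (\<lambda>x. if x \<in> B (Suc 0) U then c (hd x) else (0 :: ('v,'k) mpoly))"
  have vb: "vecin (B (Suc 0) U) \<beta>" unfolding vecin_def \<beta>_def by simp
  have pb: "pov \<beta>" unfolding pov_def \<beta>_def using c(1) by simp
  have "jeq (\<lambda>y. u (v # y)) (app (B (Suc 0) U) (Dn (Suc 0) U) \<beta>)"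
    unfolding jeq_def
  proof
    fix x
    show "u (v # x) - app (B (Suc 0) U) (Dn (Suc 0) U) \<beta> x \<in> Jd"
    proof (cases x)
      case Nil
      have "app (B (Suc 0) U) (Dn (Suc 0) U) \<beta> [] = (\<Sum>t\<in>U. c t * var t)"
        unfolding app_def sum_B1 by (rule sum.cong) (auto simp: Dn_1 \<beta>_def B_1)
      then show ?thesis using Nil c(2) by simp
    next
      case (Cons s y)
      have "v # x \<notin> B (Suc 0) T" using Cons B_len by fastforce
      then have "u (v # x) = 0" using vu unfolding vecin_def by blast
      moreover have "app (B (Suc 0) U) (Dn (Suc 0) U) \<beta> x = 0"
        unfolding app_def sum_B1 using Cons by (simp add: Dn_1)
      ultimately show ?thesis by simp
    qed
  qed
  then show ?thesis using vb pb unfolding U_def T'_def by blast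
qed

end

end

context kz
begin

lemma L_E_aux:
  assumes A1: "AA (Suc i)" and A2: "AA (Suc (Suc i))" and P0: "PP i" and P1: "PP (Suc i)"
    and E: "1 \<le> i \<Longrightarrow> EE i"
  shows "T \<subseteq> V \<Longrightarrow> vecin (B (Suc i) T) (u :: _ \<Rightarrow> ('v,'k) mpoly) \<Longrightarrow> pov u \<Longrightarrow>
     jeq (app (B (Suc i) T) (Dn (Suc i) T) u) (\<lambda>x. 0) \<Longrightarrow>
     \<exists>w. vecin (B (Suc (Suc i)) T) w \<and> pov w \<and> jeq u (app (B (Suc (Suc i)) T) (Dn (Suc (Suc i)) T) w)"
proof (induction "card T" arbitrary: T u rule: less_induct)
  case less
  note T = less.prems(1) and vu = less.prems(2) and pu = less.prems(3) and hu = less.prems(4)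
  show ?case
  proof (cases "T = {}")
    case True
    then have u0: "u x = 0" for x using vu B_empty unfolding vecin_def by auto
    show ?thesis
      by (rule exI[of _ "\<lambda>x. 0"]) (simp add: vecin_def pov_def jeq_def u0)
  next
    case False
    have finT: "finite T" using T finV finite_subset by blast
    have "Max (rk ` T) \<in> rk ` T" using finT False by (intro Max_in) auto
    then obtain v where v: "v \<in> T" "rk v = Max (rk ` T)" by (metis imageE)
    have vmax: "\<And>u. u \<in> T \<Longrightarrow> rk u \<le> rk v" using Max_ge finT v(2) by auto
    define T' where "T' = T - {v}"
    define U where "U = T' \<union> Nb v"
    have T': "T' \<subseteq> V" using T unfolding T'_def by blast
    have U: "U \<subseteq> V" using T' Nb_sub unfolding U_def by blast
    have vV: "v \<in> V" "v \<notin> T'" using v T unfolding T'_def by auto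
    have cardT': "card T' < card T" unfolding T'_def using finT v(1) by (rule card_Diff1_less)
    define a where "a = (\<lambda>x. if x \<in> B (Suc i) T' then u x else 0)"
    define b where "b = (\<lambda>y. u (v # y))"
    have va: "vecin (B (Suc i) T') a" unfolding a_def vecin_def by simp
    have pa: "pov a" using pu unfolding a_def pov_def by simp
    have vb: "vecin (B i U) b"
      unfolding vecin_def b_def
    proof (intro allI impI)
      fix y assume "y \<notin> B i U"
      then have "v # y \<notin> B (Suc i) T" using Cons_B Lt_max[OF T v(1) vmax] unfolding U_def T'_def by auto
      then show "u (v # y) = 0" using vu unfolding vecin_def by blast
    qed
    have pb: "pov b" using pu unfolding b_def pov_def by simp
    define Dab where "Dab = app (B (Suc i) T') (Dn (Suc i) T') a"
    define \<Phi> where "\<Phi> = app (B i U) (Pn i T' v) b"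
    have F: "app (B (Suc i) T) (Dn (Suc i) T) u x = Dab x + \<Phi> x - prefix v (app (B i U) (Dn i U) b) x" for x
    proof -
      have "app (B (Suc i) T') (Dn (Suc i) T') u x = Dab x"
        unfolding Dab_def a_def by (rule app_vec_cong) simp
      then show ?thesis using decompF[OF T v(1) vmax, of i u x] unfolding T'_def U_def \<Phi>_def b_def by simp
    qed
    have notB: "v # y \<notin> B i T'" for y
      by (cases i) (use vV Cons_B in auto)
    have Dab0: "Dab (v # y) = 0" for y
    proof -
      have "vecin (B i T') Dab" unfolding Dab_def
        by (rule vecin_app) (use A1[unfolded AA_def, rule_format, OF T'] in auto)
      then show ?thesis using notB unfolding vecin_def by blast
    qed
    have Pi: "vecin (B i T') (Pn i T' v y) \<and> lin (Pn i T' v y :: _ \<Rightarrow> ('v,'k) mpoly)" if "y \<in> B i U" for y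
      using P0[unfolded PP_def, rule_format, OF T' vV, of y] that unfolding U_def by auto
    have Phi0: "\<Phi> (v # y) = 0" for y
    proof -
      have "vecin (B i T') \<Phi>" unfolding \<Phi>_def by (rule vecin_app) (use Pi in blast)
      then show ?thesis using notB unfolding vecin_def by blast
    qed
    have hux: "app (B (Suc i) T) (Dn (Suc i) T) u x \<in> Jd" for x
      using hu unfolding jeq_def by (metis diff_zero)
    have G2: "Dab x + \<Phi> x \<in> Jd" for x
    proof (cases x)
      case Nil then show ?thesis using hux[of x] F[of x] by simp
    next
      case (Cons s y)
      show ?thesis
      proof (cases "s = v")
        case True then show ?thesis using Cons Dab0 Phi0 by simp
      next
        case False then show ?thesis using hux[of x] F[of x] Cons by simp
      qed
    qed
    have G1: "jeq (app (B i U) (Dn i U) b) (\<lambda>x. 0)"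
      unfolding jeq_def
    proof
      fix y
      have "- app (B i U) (Dn i U) b y \<in> Jd" using hux[of "v # y"] F[of "v # y"] Dab0 Phi0 by simp
      then show "app (B i U) (Dn i U) b y - 0 \<in> Jd" using J_uminus by fastforce
    qed
    obtain \<beta> where \<beta>: "vecin (B (Suc i) U) \<beta>" "pov \<beta>" "jeq b (app (B (Suc i) U) (Dn (Suc i) U) \<beta>)"
    proof (cases i)
      case 0
      have "\<exists>\<beta>. vecin (B (Suc 0) U) \<beta> \<and> pov \<beta> \<and> jeq b (app (B (Suc 0) U) (Dn (Suc 0) U) \<beta>)"
        using beta0[OF T v(1) vmax, of u] vu pu hu 0 unfolding U_def T'_def b_def by simp
      then show ?thesis using that 0 by blast
    next
      case (Suc j)
      then have "1 \<le> i" by simp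
      from E[OF this, unfolded EE_def, rule_format, OF U vb pb G1] that show ?thesis by blast
    qed
    define w1 where "w1 = (\<lambda>x. - prefix v \<beta> x)"
    define P\<beta> where "P\<beta> = app (B (Suc i) U) (Pn (Suc i) T' v) \<beta>"
    define D\<beta> where "D\<beta> = app (B (Suc i) U) (Dn (Suc i) U) \<beta>"
    have H: "app (B (Suc (Suc i)) T) (Dn (Suc (Suc i)) T) w1 x = - P\<beta> x + prefix v D\<beta> x" for x
      using decompH[OF T v(1) vmax, of i \<beta> x] \<beta>(1) unfolding w1_def P\<beta>_def D\<beta>_def U_def T'_def by simp
    have Pk: "vecin (B (Suc i) T') (Pn (Suc i) T' v y) \<and> lin (Pn (Suc i) T' v y :: _ \<Rightarrow> ('v,'k) mpoly) \<and>
       jeq (app (B (Suc i) T') (Dn (Suc i) T') (Pn (Suc i) T' v y :: _ \<Rightarrow> ('v,'k) mpoly)) (app (B i U) (Pn i T' v) (Dn (Suc i) U y))"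
      if "y \<in> B (Suc i) U" for y
      using P1[unfolded PP_def, rule_format, OF T' vV, of y] that unfolding U_def by auto
    define r where "r = (\<lambda>x. a x + P\<beta> x)"
    have vr: "vecin (B (Suc i) T') r"
    proof -
      have "vecin (B (Suc i) T') P\<beta>" unfolding P\<beta>_def by (rule vecin_app) (use Pk in blast)
      then show ?thesis using va unfolding r_def vecin_def by simp
    qed
    have pr: "pov r"
    proof -
      have "pov P\<beta>" unfolding P\<beta>_def
        by (rule pov_app[OF \<beta>(2)]) (use Pk in \<open>auto simp: lin_def\<close>)
      then show ?thesis using pa unfolding r_def pov_def by (auto intro: poly_over_add)
    qed
    have k1: "app (B (Suc i) T') (Dn (Suc i) T') P\<beta> x - \<Phi> x \<in> Jd" for x
    proof -
      have eq2: "app (B (Suc i) T') (Dn (Suc i) T') P\<beta> x = app (B (Suc i) U) (\<lambda>y. app (B (Suc i) T') (Dn (Suc i) T') (Pn (Suc i) T' v y)) \<beta> x" for x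
        unfolding P\<beta>_def by (rule app_comp)
      have j3: "jeq (app (B (Suc i) U) (\<lambda>y. app (B (Suc i) T') (Dn (Suc i) T') (Pn (Suc i) T' v y)) \<beta>)
                    (app (B (Suc i) U) (\<lambda>y. app (B i U) (Pn i T' v) (Dn (Suc i) U y)) \<beta>)"
        by (rule jeq_app2[OF \<beta>(2)]) (use Pk in blast)
      have eq4: "app (B (Suc i) U) (\<lambda>y. app (B i U) (Pn i T' v) (Dn (Suc i) U y)) \<beta> x = app (B i U) (Pn i T' v) D\<beta> x" for x
        unfolding D\<beta>_def by (rule app_comp[symmetric])
      have j5: "jeq (app (B i U) (Pn i T' v) D\<beta>) \<Phi>"
        unfolding \<Phi>_def by (rule jeq_app[OF jeq_sym[OF \<beta>(3)[folded D\<beta>_def]]]) (use Pi in \<open>auto simp: lin_def\<close>)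
      have "jeq (app (B (Suc i) T') (Dn (Suc i) T') P\<beta>) (app (B i U) (Pn i T' v) D\<beta>)"
        using jeq_cong[OF j3, of "app (B (Suc i) T') (Dn (Suc i) T') P\<beta>" "app (B i U) (Pn i T' v) D\<beta>"] eq2 eq4 by simp
      from jeq_trans[OF this j5] show ?thesis unfolding jeq_def by blast
    qed
    have Rj: "jeq (app (B (Suc i) T') (Dn (Suc i) T') r) (\<lambda>x. 0)"
      unfolding jeq_def
    proof
      fix x
      have "app (B (Suc i) T') (Dn (Suc i) T') r x = Dab x + app (B (Suc i) T') (Dn (Suc i) T') P\<beta> x"
        unfolding r_def Dab_def by (rule app_add_vec)
      also have "\<dots> = (Dab x + \<Phi> x) + (app (B (Suc i) T') (Dn (Suc i) T') P\<beta> x - \<Phi> x)" by simp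
      also have "\<dots> \<in> Jd" by (rule J_add[OF G2 k1])
      finally show "app (B (Suc i) T') (Dn (Suc i) T') r x - 0 \<in> Jd" by simp
    qed
    from less.hyps[OF cardT' T' vr pr Rj]
    obtain w2 where w2: "vecin (B (Suc (Suc i)) T') w2" "pov w2" "jeq r (app (B (Suc (Suc i)) T') (Dn (Suc (Suc i)) T') w2)"
      by blast
    define w where "w = (\<lambda>x. w1 x + w2 x)"
    have vw1: "vecin (B (Suc (Suc i)) T) w1"
      unfolding vecin_def w1_def
    proof (intro allI impI)
      fix x assume x: "x \<notin> B (Suc (Suc i)) T"
      show "- prefix v \<beta> x = 0"
      proof (cases x)
        case (Cons s y)
        show ?thesis
        proof (cases "s = v")
          case True
          then have "y \<notin> B (Suc i) U" using x Cons Cons_B Lt_max[OF T v(1) vmax] v(1) unfolding U_def T'_def by auto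
          then show ?thesis using \<beta>(1) Cons True unfolding vecin_def by simp
        qed (use Cons in simp)
      qed simp
    qed
    have BT': "B (Suc (Suc i)) T' \<subseteq> B (Suc (Suc i)) T" unfolding T'_def by (rule B_mono) blast
    have vw: "vecin (B (Suc (Suc i)) T) w"
      using vw1 vecin_mono[OF w2(1) BT'] unfolding w_def vecin_def by simp
    have pw: "pov w"
    proof -
      have "pov w1" using \<beta>(2) unfolding w1_def pov_def prefix_def by (auto split: list.splits intro: poly_over_uminus)
      then show ?thesis using w2(2) unfolding w_def pov_def by (auto intro: poly_over_add)
    qed
    have W2: "app (B (Suc (Suc i)) T) (Dn (Suc (Suc i)) T) w2 x = app (B (Suc (Suc i)) T') (Dn (Suc (Suc i)) T') w2 x" for x
    proof -
      have "app (B (Suc (Suc i)) T) (Dn (Suc (Suc i)) T) w2 x = app (B (Suc (Suc i)) T') (Dn (Suc (Suc i)) T) w2 x"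
        by (rule app_mono_neutral[OF finite_B[OF T] BT' w2(1)])
      also have "\<dots> = app (B (Suc (Suc i)) T') (Dn (Suc (Suc i)) T') w2 x"
      proof (rule app_cong)
        fix y assume y: "y \<in> B (Suc (Suc i)) T'"
        then obtain s y' where sy: "y = s # y'" using Nil_B by (cases y) auto
        then have "s \<in> T - {v}" using y Cons_B unfolding T'_def by auto
        then have "Lt T s = Lt T' s" using Lt_rem[OF T v(1) vmax] unfolding T'_def by auto
        then show "Dn (Suc (Suc i)) T y x = Dn (Suc (Suc i)) T' y x" unfolding sy using Dn_loc by metis
      qed
      finally show ?thesis .
    qed
    have "jeq u (app (B (Suc (Suc i)) T) (Dn (Suc (Suc i)) T) w)"
      unfolding jeq_def
    proof
      fix x
      have us: "u x = a x + prefix v b x" using u_split[OF T v(1) vmax vu, of x] unfolding a_def b_def T'_def by simp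
      have aw: "app (B (Suc (Suc i)) T) (Dn (Suc (Suc i)) T) w x = - P\<beta> x + prefix v D\<beta> x + app (B (Suc (Suc i)) T') (Dn (Suc (Suc i)) T') w2 x"
        unfolding w_def app_add_vec H W2 ..
      have e1: "r x - app (B (Suc (Suc i)) T') (Dn (Suc (Suc i)) T') w2 x \<in> Jd" using w2(3) unfolding jeq_def by blast
      have e2: "prefix v b x - prefix v D\<beta> x \<in> Jd" using jeq_prefix[OF \<beta>(3)[folded D\<beta>_def], of v] unfolding jeq_def by blast
      have "u x - app (B (Suc (Suc i)) T) (Dn (Suc (Suc i)) T) w x =
         (r x - app (B (Suc (Suc i)) T') (Dn (Suc (Suc i)) T') w2 x) + (prefix v b x - prefix v D\<beta> x)"
        unfolding us aw r_def by simp
      also have "\<dots> \<in> Jd" by (rule J_add[OF e1 e2])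
      finally show "u x - app (B (Suc (Suc i)) T) (Dn (Suc (Suc i)) T) w x \<in> Jd" .
    qed
    then show ?thesis using vw pw by blast
  qed
qed

end

context kz
begin

lemma L_E:
  assumes "AA (Suc i)" "AA (Suc (Suc i))" "PP i" "PP (Suc i)" "1 \<le> i \<Longrightarrow> EE i"
  shows "EE (Suc i)"
  unfolding EE_def using L_E_aux[OF assms] by blast

lemma master: "(AA i \<and> AA (Suc i) \<and> PP i \<and> CC i \<and> (1 \<le> i \<longrightarrow> EE i)) \<and> PP (i - 1)"
proof (induction i)
  case 0
  have "AA (Suc 0)" by (rule L_A[OF L_P0 L_A0])
  then show ?case using L_A0 L_P0 L_C0 by simp
next
  case (Suc i)
  then have A0: "AA i" and A1: "AA (Suc i)" and P0: "PP i" and C0: "CC i" and E0: "1 \<le> i \<Longrightarrow> EE i"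
    and Pm: "PP (i - 1)" by auto
  have P1: "PP (Suc i)" by (rule L_P[OF A0 A1 P0 C0 E0]) (use Pm in auto)
  have A2: "AA (Suc (Suc i))" by (rule L_A[OF P1 A1])
  have C1: "CC (Suc i)" by (rule L_C[OF A1 P1 C0])
  have E1: "EE (Suc i)" by (rule L_E[OF A1 A2 P0 P1 E0])
  show ?case using A1 A2 P1 C1 E1 P0 by simp
qed

lemma AAi: "AA i" using master by blast
lemma CCi: "CC i" using master by blast
lemma EEi: "1 \<le> i \<Longrightarrow> EE i" using master by blast

definition en :: "nat \<Rightarrow> nat \<Rightarrow> 'v list" where
  "en i = (SOME f. bij_betw f {..<card (B i V)} (B i V))"

definition ie :: "nat \<Rightarrow> 'v list \<Rightarrow> nat" where
  "ie i = inv_into {..<card (B i V)} (en i)"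

lemma en_bij: "bij_betw (en i) {..<card (B i V)} (B i V)"
proof -
  have "\<exists>f. bij_betw f {0..<card (B i V)} (B i V)" by (rule ex_bij_betw_nat_finite[OF finite_B]) simp
  then have "\<exists>f. bij_betw f {..<card (B i V)} (B i V)" by (simp add: atLeast0LessThan)
  then show ?thesis unfolding en_def by (rule someI_ex)
qed

lemma en_in: "c < card (B i V) \<Longrightarrow> en i c \<in> B i V"
  using en_bij[of i] unfolding bij_betw_def by auto

lemma ie_en: "c < card (B i V) \<Longrightarrow> ie i (en i c) = c"
  unfolding ie_def using en_bij[of i] unfolding bij_betw_def by (simp add: inv_into_f_f)

lemma en_ie: "w \<in> B i V \<Longrightarrow> en i (ie i w) = w \<and> ie i w < card (B i V)"
proof -
  assume w: "w \<in> B i V"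
  have img: "w \<in> en i ` {..<card (B i V)}" using en_bij[of i] w unfolding bij_betw_def by simp
  show ?thesis unfolding ie_def using f_inv_into_f[OF img] inv_into_into[OF img] by simp
qed

lemma sum_en: "(\<Sum>c<card (B i V). g (en i c)) = (\<Sum>w\<in>B i V. g w)"
  by (rule sum.reindex_bij_betw[OF en_bij])

lemma en0: "en 0 0 = []"
  using en_in[of 0 0] by simp

theorem kz_koszul: "koszul_quotient V (Jd :: ('v,'k) mpoly set)"
  unfolding koszul_quotient_def
proof (intro exI conjI)
  define b where "b = (\<lambda>i. card (B i V))"
  define M where "M = (\<lambda>i r c. Dn i V (en i c) (en (i - 1) r) :: ('v,'k) mpoly)"
  show "b 0 = 1" unfolding b_def by simp
  show "\<forall>i\<ge>1. \<forall>r<b (i - 1). \<forall>c<b i. poly_over V (M i r c) \<and> homog 1 (M i r c)"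
  proof (intro allI impI)
    fix i r c assume "1 \<le> i" "r < b (i - 1)" "c < b i"
    then have "lin (Dn i V (en i c) :: _ \<Rightarrow> ('v,'k) mpoly)"
      using AAi[of i, unfolded AA_def, rule_format, of V "en i c"] en_in[of c i] unfolding b_def by auto
    then show "poly_over V (M i r c) \<and> homog 1 (M i r c)" unfolding M_def lin_def by blast
  qed
  show "\<forall>p. poly_over V p \<longrightarrow> (p \<in> gen_ideal V (var ` V) \<longleftrightarrow>
      (\<exists>u. (\<forall>c<b 1. poly_over V (u c)) \<and> p - (\<Sum>c<b 1. M 1 0 c * u c) \<in> Jd))"
  proof (intro allI impI)
    fix p :: "('v,'k) mpoly" assume pv: "poly_over V p"
    have M1: "M 1 0 c = var (hd (en 1 c))" if "c < b 1" for c
    proof -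
      have "en 1 c \<in> B (Suc 0) V" using en_in[of c 1] that unfolding b_def by simp
      then obtain s where "en 1 c = [s]" unfolding B_1 by blast
      then show ?thesis unfolding M_def by (simp add: en0 Dn_1)
    qed
    have "p \<in> gen_ideal V (var ` V) \<longleftrightarrow> (\<exists>u. (\<forall>t. poly_over V (u t)) \<and> p - (\<Sum>t\<in>V. u t * var t) \<in> Jd)"
      unfolding Id_V by (rule Id_E0[OF subset_refl pv])
    also have "\<dots> \<longleftrightarrow> (\<exists>u. (\<forall>c<b 1. poly_over V (u c)) \<and> p - (\<Sum>c<b 1. M 1 0 c * u c) \<in> Jd)"
    proof
      assume "\<exists>u. (\<forall>t. poly_over V (u t)) \<and> p - (\<Sum>t\<in>V. u t * var t) \<in> Jd"
      then obtain u where u: "\<forall>t. poly_over V (u t)" "p - (\<Sum>t\<in>V. u t * var t) \<in> Jd" by blast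
      have "(\<Sum>c<b 1. M 1 0 c * u (hd (en 1 c))) = (\<Sum>c<b 1. var (hd (en 1 c)) * u (hd (en 1 c)))"
      proof (rule sum.cong)
        fix c assume "c \<in> {..<b 1}"
        then show "M 1 0 c * u (hd (en 1 c)) = var (hd (en 1 c)) * u (hd (en 1 c))" using M1[of c] by simp
      qed simp
      also have "\<dots> = (\<Sum>w\<in>B (Suc 0) V. var (hd w) * u (hd w))" unfolding b_def using sum_en[of "\<lambda>w. var (hd w) * u (hd w)" 1] by simp
      also have "\<dots> = (\<Sum>t\<in>V. u t * var t)" unfolding sum_B1 by (simp add: mult.commute)
      finally show "\<exists>u. (\<forall>c<b 1. poly_over V (u c)) \<and> p - (\<Sum>c<b 1. M 1 0 c * u c) \<in> Jd"
        using u by (intro exI[of _ "\<lambda>c. u (hd (en 1 c))"]) simp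
    next
      assume "\<exists>u. (\<forall>c<b 1. poly_over V (u c)) \<and> p - (\<Sum>c<b 1. M 1 0 c * u c) \<in> Jd"
      then obtain u where u: "\<forall>c<b 1. poly_over V (u c)" "p - (\<Sum>c<b 1. M 1 0 c * u c) \<in> Jd" by blast
      define u' where "u' t = (if t \<in> V then u (ie 1 [t]) else 0)" for t
      have "[t] \<in> B 1 V" if "t \<in> V" for t using that B_1 by auto
      then have ie1: "t \<in> V \<Longrightarrow> en 1 (ie 1 [t]) = [t] \<and> ie 1 [t] < b 1" for t using en_ie unfolding b_def by blast
      have "(\<Sum>t\<in>V. u' t * var t) = (\<Sum>w\<in>B (Suc 0) V. u' (hd w) * var (hd w))" unfolding sum_B1 by simp
      also have "\<dots> = (\<Sum>c<b 1. u' (hd (en 1 c)) * var (hd (en 1 c)))" unfolding b_def using sum_en[of "\<lambda>w. u' (hd w) * var (hd w)" 1] by simp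
      also have "\<dots> = (\<Sum>c<b 1. M 1 0 c * u c)"
      proof (rule sum.cong)
        fix c assume c: "c \<in> {..<b 1}"
        then have "en 1 c \<in> B (Suc 0) V" using en_in[of c 1] unfolding b_def by simp
        then obtain s where s: "en 1 c = [s]" "s \<in> V" unfolding B_1 by blast
        have "ie 1 [s] = c" using ie_en[of c 1] c s unfolding b_def by simp
        then show "u' (hd (en 1 c)) * var (hd (en 1 c)) = M 1 0 c * u c"
          using M1[of c] c s unfolding u'_def by (simp add: mult.commute)
      qed simp
      finally have "p - (\<Sum>t\<in>V. u' t * var t) \<in> Jd" using u(2) by simp
      moreover have "\<forall>t. poly_over V (u' t)" using u(1) ie1 unfolding u'_def by simp
      ultimately show "\<exists>u. (\<forall>t. poly_over V (u t)) \<and> p - (\<Sum>t\<in>V. u t * var t) \<in> Jd" by blast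
    qed
    finally show "p \<in> gen_ideal V (var ` V) \<longleftrightarrow>
      (\<exists>u. (\<forall>c<b 1. poly_over V (u c)) \<and> p - (\<Sum>c<b 1. M 1 0 c * u c) \<in> Jd)" .
  qed
  show "\<forall>i\<ge>1. \<forall>r<b (i - 1). \<forall>c<b (i + 1). (\<Sum>j<b i. M i r j * M (i + 1) j c) \<in> Jd"
  proof (intro allI impI)
    fix i r c assume i: "1 \<le> i" and r: "r < b (i - 1)" and c: "c < b (i + 1)"
    have "(\<Sum>j<b i. M i r j * M (i + 1) j c) = (\<Sum>w\<in>B i V. Dn (Suc i) V (en (Suc i) c) w * Dn i V w (en (i - 1) r))"
      unfolding b_def M_def using sum_en[of "\<lambda>w. Dn i V w (en (i - 1) r) * Dn (Suc i) V (en (Suc i) c) w" i]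
      by (simp add: mult.commute)
    also have "\<dots> = app (B i V) (Dn i V) (Dn (Suc i) V (en (Suc i) c)) (en (i - 1) r)"
      unfolding app_def ..
    also have "\<dots> \<in> Jd"
      using CCi[of i, unfolded CC_def, rule_format, of V "en (Suc i) c"] en_in[of c "Suc i"] c
      unfolding b_def jeq_def by simp
    finally show "(\<Sum>j<b i. M i r j * M (i + 1) j c) \<in> Jd" .
  qed
  show "\<forall>i\<ge>1. \<forall>u. (\<forall>j<b i. poly_over V (u j)) \<and> (\<forall>r<b (i - 1). (\<Sum>j<b i. M i r j * u j) \<in> Jd) \<longrightarrow>
      (\<exists>w. (\<forall>c<b (i + 1). poly_over V (w c)) \<and> (\<forall>j<b i. u j - (\<Sum>c<b (i + 1). M (i + 1) j c * w c) \<in> Jd))"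
  proof (intro allI impI)
    fix i u assume i: "1 \<le> i" and hyp: "(\<forall>j<b i. poly_over V (u j)) \<and> (\<forall>r<b (i - 1). (\<Sum>j<b i. M i r j * u j) \<in> Jd)"
    define U where "U w = (if w \<in> B i V then u (ie i w) else 0)" for w
    have vU: "vecin (B i V) U" unfolding U_def vecin_def by simp
    have pU: "pov U" unfolding U_def pov_def using hyp en_ie unfolding b_def by auto
    have appU: "app (B i V) (Dn i V) U x = (\<Sum>j<b i. u j * Dn i V (en i j) x)" for x
    proof -
      have "app (B i V) (Dn i V) U x = (\<Sum>j<b i. U (en i j) * Dn i V (en i j) x)"
        unfolding app_def b_def using sum_en[of "\<lambda>w. U w * Dn i V w x" i] by simp
      also have "\<dots> = (\<Sum>j<b i. u j * Dn i V (en i j) x)"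
        by (rule sum.cong) (simp_all add: U_def en_in ie_en b_def)
      finally show ?thesis .
    qed
    have "jeq (app (B i V) (Dn i V) U) (\<lambda>x. 0)"
      unfolding jeq_def
    proof
      fix x
      show "app (B i V) (Dn i V) U x - 0 \<in> Jd"
      proof (cases "x \<in> B (i - 1) V")
        case True
        then have x: "en (i - 1) (ie (i - 1) x) = x" "ie (i - 1) x < b (i - 1)" using en_ie unfolding b_def by auto
        have "app (B i V) (Dn i V) U x = (\<Sum>j<b i. M i (ie (i - 1) x) j * u j)"
          unfolding appU M_def x(1) by (simp add: mult.commute)
        then show ?thesis using hyp x(2) by simp
      next
        case False
        have "Dn i V (en i j) x = 0" if "j < b i" for j
          using AAi[of i, unfolded AA_def, rule_format, of V "en i j"] en_in[of j i] that False
          unfolding b_def vecin_def by auto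
        then show ?thesis unfolding appU by simp
      qed
    qed
    from EEi[OF i, unfolded EE_def, rule_format, OF subset_refl vU pU this]
    obtain W where W: "vecin (B (Suc i) V) W" "pov W" "jeq U (app (B (Suc i) V) (Dn (Suc i) V) W)" by blast
    show "\<exists>w. (\<forall>c<b (i + 1). poly_over V (w c)) \<and> (\<forall>j<b i. u j - (\<Sum>c<b (i + 1). M (i + 1) j c * w c) \<in> Jd)"
    proof (intro exI[of _ "\<lambda>c. W (en (Suc i) c)"] conjI allI impI)
      fix c show "poly_over V (W (en (Suc i) c))" using W(2) unfolding pov_def by blast
    next
      fix j assume j: "j < b i"
      have "(\<Sum>c<b (i + 1). M (i + 1) j c * W (en (Suc i) c)) = app (B (Suc i) V) (Dn (Suc i) V) W (en i j)"
        unfolding M_def b_def app_def using sum_en[of "\<lambda>w. Dn (Suc i) V w (en i j) * W w" "Suc i"]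
        by (simp add: mult.commute)
      moreover have "U (en i j) = u j" unfolding U_def using j en_in ie_en unfolding b_def by simp
      ultimately show "u j - (\<Sum>c<b (i + 1). M (i + 1) j c * W (en (Suc i) c)) \<in> Jd"
        using W(3) unfolding jeq_def by metis
    qed
  qed
qed

end

theorem mainTheorem15:
  fixes n :: nat
  assumes "n \<ge> 3"
  shows "preWDVV_koszul TYPE('k::field_char_0) n"
proof -
  have "P n \<subseteq> Pow (Pow {1..n})" unfolding P_def by auto
  then have fin: "finite (P n)" by (rule finite_subset) simp
  obtain f :: "nat set set \<Rightarrow> nat" and m where f: "f ` P n = {i. i < m}" "inj_on f (P n)"
    using finite_imp_inj_to_nat_seg[OF fin] by blast
  interpret K: kz "P n" "\<lambda>\<sigma> \<tau>. a \<sigma> \<tau> = 4" f "TYPE('k)"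
    by unfold_locales (use fin f(2) in auto)
  have JJ: "(J n :: (nat set set, 'k) mpoly set) = K.Jd"
    unfolding J_def K.Gs_def by simp
  show ?thesis unfolding preWDVV_koszul_def JJ by (rule K.kz_koszul)
qed

end
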